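(* Let $n\ge1$, $a,b\in\mathbb{C}$, and for $\beta=(\alpha_1,\dots,\alpha_n,\delta)\in\mathbb{C}^{n+1}$ put \[ \Phi(\beta;x)=\int_a^b t^{-\delta-1}\prod_{k=1}^n(x_{1k}+x_{2k}t)^{\alpha_k}\,dt,\qquad g(t,x)=t^{-\delta}\prod_{k=1}^n(x_{1k}+x_{2k}t)^{\alpha_k}, \] and assume $\mathrm{Re}(-\delta-1)>0$ and $\mathrm{Re}\,\alpha_k>0$ for all $k$. For each $1\le k\le n$, let $a_{1k}=e_k$ and $a_{2k}=e_k+e_{n+1}$ in $\mathbb{Z}^{n+1}$ (standard basis $e_1,\dots,e_{n+1}$). Then $\Phi$ satisfies the contiguity relations \begin{align*} S(\beta;-a_{1k})\,\Phi(\beta;x)&=\alpha_k\,\Phi(\beta-a_{1k};x),\\ S(\beta-a_{1k};+a_{1k})\,\Phi(\beta-a_{1k};x)&=\Big(\sum_{i=1}^n\alpha_i-\delta\Big)\Phi(\beta;x)-[g(t,x)]_{t=a}^{t=b},\\ S(\beta;-a_{2k})\,\Phi(\beta;x)&=\alpha_k\,\Phi(\beta-a_{2k};x),\\ S(\beta-a_{2k};+a_{2k})\,\Phi(\beta-a_{2k};x)&=\delta\,\Phi(\beta;x)+[g(t,x)]_{t=a}^{t=b}, \end{align*} where \begin{align*} S(\beta;-a_{1k})&=\partial_{1k},\qquad S(\beta;-a_{2k})=\partial_{2k},\\ S(\beta-a_{1k};+a_{1k})&=\sum_{i=1,\,i\ne k}^n(x_{1i}x_{2k}-x_{1k}x_{2i})\partial_{2i}+\sum_{i=1}^n\alpha_i\,x_{1k},\\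 S(\beta-a_{2k};+a_{2k})&=\sum_{i=1,\,i\ne k}^n x_{1k}x_{2i}\partial_{1i}+\Big(\sum_{i=1,\,i\ne k}^n\theta_{2i}+\alpha_k\Big)x_{2k}. \end{align*}
   Context: Variables $x=(x_{ij})_{i=1,2;\,1\le j\le n}$, $\partial_{ij}=\partial/\partial x_{ij}$, $\theta_{ij}=x_{ij}\partial_{ij}$; products of operators are compositions. $[g(t,x)]_{t=a}^{t=b}=g(b,x)-g(a,x)$, with $g$ built from the parameter $\beta=(\alpha_1,\dots,\alpha_n,\delta)$; branches of the powers are fixed along the path of integration. For a parameter vector $\beta'=(\alpha'_1,\dots,\alpha'_n,\delta')$, $\Phi(\beta';x)$ denotes the same integral with $\alpha_k,\delta$ replaced by $\alpha'_k,\delta'$. The $\alpha_i$ in the operators are the components of $\beta$. *)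

theory Defs
  imports "HOL-Complex_Analysis.Complex_Analysis"
begin

text \<open>Points x = (x_{1j}, x_{2j})_j are represented as pairs (fst x, snd x) of
  vectors in complex^'n; the number n of columns is CARD('n).\<close>

text \<open>Power with a fixed branch: w is the base, l a chosen logarithm of w
  (exp l = w whenever w is nonzero), c the exponent.  At w = 0 the value is the
  limit 0 (the exponents used at such points have positive real part).\<close>
definition pw :: "complex \<Rightarrow> complex \<Rightarrow> complex \<Rightarrow> complex" where
  "pw w l c = (if w = 0 then 0 else exp (c * l))"

definition lin :: "(complex^'n) \<times> (complex^'n) \<Rightarrow> 'n \<Rightarrow> complex \<Rightarrow> complex" where
  "lin x k t = fst x $ k + snd x $ k * t"

definition integrand ::
  "(real \<Rightarrow> complex) \<Rightarrow> (real \<Rightarrow> complex) \<Rightarrow> ('n \<Rightarrow> (complex^'n) \<times> (complex^'n) \<Rightarrow> real \<Rightarrow> complex)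
   \<Rightarrow> complex^'n \<Rightarrow> complex \<Rightarrow> (complex^'n) \<times> (complex^'n) \<Rightarrow> real \<Rightarrow> complex" where
  "integrand \<gamma> lt lL \<alpha> \<delta> x s =
     pw (\<gamma> s) (lt s) (- \<delta> - 1) * (\<Prod>k\<in>UNIV. pw (lin x k (\<gamma> s)) (lL k x s) (\<alpha> $ k))"

text \<open>Phi(beta; x) = integral along gamma (the contour integral written out,
  exactly as in the definition of has_contour_integral).\<close>
definition Phi ::
  "(real \<Rightarrow> complex) \<Rightarrow> (real \<Rightarrow> complex) \<Rightarrow> ('n \<Rightarrow> (complex^'n) \<times> (complex^'n) \<Rightarrow> real \<Rightarrow> complex)
   \<Rightarrow> complex^'n \<Rightarrow> complex \<Rightarrow> (complex^'n) \<times> (complex^'n) \<Rightarrow> complex" where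
  "Phi \<gamma> lt lL \<alpha> \<delta> x =
     integral {0..1} (\<lambda>s. integrand \<gamma> lt lL \<alpha> \<delta> x s * vector_derivative \<gamma> (at s within {0..1}))"

definition gfun ::
  "(real \<Rightarrow> complex) \<Rightarrow> (real \<Rightarrow> complex) \<Rightarrow> ('n \<Rightarrow> (complex^'n) \<times> (complex^'n) \<Rightarrow> real \<Rightarrow> complex)
   \<Rightarrow> complex^'n \<Rightarrow> complex \<Rightarrow> (complex^'n) \<times> (complex^'n) \<Rightarrow> real \<Rightarrow> complex" where
  "gfun \<gamma> lt lL \<alpha> \<delta> x s =
     pw (\<gamma> s) (lt s) (- \<delta>) * (\<Prod>k\<in>UNIV. pw (lin x k (\<gamma> s)) (lL k x s) (\<alpha> $ k))"

definition upd1 :: "(complex^'n) \<times> (complex^'n) \<Rightarrow> 'n \<Rightarrow> complex \<Rightarrow> (complex^'n) \<times> (complex^'n)" where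
  "upd1 x i z = ((\<chi> j. if j = i then z else fst x $ j), snd x)"

definition upd2 :: "(complex^'n) \<times> (complex^'n) \<Rightarrow> 'n \<Rightarrow> complex \<Rightarrow> (complex^'n) \<times> (complex^'n)" where
  "upd2 x i z = (fst x, (\<chi> j. if j = i then z else snd x $ j))"

definition pd1 :: "((complex^'n) \<times> (complex^'n) \<Rightarrow> complex) \<Rightarrow> 'n \<Rightarrow> (complex^'n) \<times> (complex^'n) \<Rightarrow> complex" where
  "pd1 F i x = deriv (\<lambda>z. F (upd1 x i z)) (fst x $ i)"

definition pd2 :: "((complex^'n) \<times> (complex^'n) \<Rightarrow> complex) \<Rightarrow> 'n \<Rightarrow> (complex^'n) \<times> (complex^'n) \<Rightarrow> complex" where
  "pd2 F i x = deriv (\<lambda>z. F (upd2 x i z)) (snd x $ i)"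

end

theory Submission
  imports Defs
begin

definition Bprop :: "(complex \<Rightarrow> real \<Rightarrow> complex) \<Rightarrow> (real \<Rightarrow> complex) \<Rightarrow> complex \<Rightarrow> real \<Rightarrow> real \<Rightarrow> bool" where
  "Bprop \<phi> \<phi>' z0 p q \<longleftrightarrow> (\<forall>\<^sub>F z in nhds z0. \<phi> z integrable_on {p..q}) \<and> \<phi>' integrable_on {p..q}
     \<and> ((\<lambda>z. integral {p..q} (\<phi> z)) has_field_derivative integral {p..q} \<phi>') (at z0)"

lemma Bprop_refl: "Bprop \<phi> \<phi>' z0 p p"
proof -
  have i: "f integrable_on {p..p}" for f :: "real \<Rightarrow> complex"
    by (rule has_integral_integrable[OF has_integral_null_real]) simp
  show ?thesis unfolding Bprop_def using i by auto
qed

lemma Bprop_combine: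
  assumes "p \<le> q" "q \<le> r" "Bprop \<phi> \<phi>' z0 p q" "Bprop \<phi> \<phi>' z0 q r"
  shows "Bprop \<phi> \<phi>' z0 p r"
proof -
  from assms(3,4) have e1: "\<forall>\<^sub>F z in nhds z0. \<phi> z integrable_on {p..q}"
    and e2: "\<forall>\<^sub>F z in nhds z0. \<phi> z integrable_on {q..r}"
    and i1: "\<phi>' integrable_on {p..q}" and i2: "\<phi>' integrable_on {q..r}"
    and d1: "((\<lambda>z. integral {p..q} (\<phi> z)) has_field_derivative integral {p..q} \<phi>') (at z0)"
    and d2: "((\<lambda>z. integral {q..r} (\<phi> z)) has_field_derivative integral {q..r} \<phi>') (at z0)"
    unfolding Bprop_def by auto
  have ev: "\<forall>\<^sub>F z in nhds z0. \<phi> z integrable_on {p..r} \<and>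
      integral {p..r} (\<phi> z) = integral {p..q} (\<phi> z) + integral {q..r} (\<phi> z)"
    using eventually_conj[OF e1 e2]
  proof (rule eventually_mono)
    fix z assume h: "\<phi> z integrable_on {p..q} \<and> \<phi> z integrable_on {q..r}"
    have i: "\<phi> z integrable_on {p..r}" using Henstock_Kurzweil_Integration.integrable_combine[OF assms(1,2)] h by blast
    show "\<phi> z integrable_on {p..r} \<and>
      integral {p..r} (\<phi> z) = integral {p..q} (\<phi> z) + integral {q..r} (\<phi> z)"
      using i Henstock_Kurzweil_Integration.integral_combine[OF assms(1,2) i] by simp
  qed
  have "\<phi>' integrable_on {p..r}" using i1 i2 assms(1,2) Henstock_Kurzweil_Integration.integrable_combine by blast
  moreover have "integral {p..r} \<phi>' = integral {p..q} \<phi>' + integral {q..r} \<phi>'"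
    using Henstock_Kurzweil_Integration.integral_combine[OF assms(1,2) Henstock_Kurzweil_Integration.integrable_combine[OF assms(1,2) i1 i2]] by simp
  moreover have "((\<lambda>z. integral {p..r} (\<phi> z)) has_field_derivative integral {p..q} \<phi>' + integral {q..r} \<phi>') (at z0)"
  proof -
    have d12: "((\<lambda>z. integral {p..q} (\<phi> z) + integral {q..r} (\<phi> z)) has_field_derivative integral {p..q} \<phi>' + integral {q..r} \<phi>') (at z0)"
      using d1 d2 by (rule DERIV_add)
    have ev': "\<forall>\<^sub>F z in nhds z0. integral {p..r} (\<phi> z) = integral {p..q} (\<phi> z) + integral {q..r} (\<phi> z)"
      using ev by (rule eventually_mono) auto
    show ?thesis by (rule iffD2[OF DERIV_cong_ev[OF refl ev' refl] d12])
  qed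
  ultimately show ?thesis
    unfolding Bprop_def using ev by (auto elim: eventually_mono)
qed

lemma Bprop_chain:
  assumes loc: "\<And>s1. s1 \<in> {0..1} \<Longrightarrow> \<exists>\<epsilon>>0. \<forall>p q. p \<in> {0..1} \<longrightarrow> q \<in> {0..1} \<longrightarrow> p \<le> q
      \<longrightarrow> \<bar>p - s1\<bar> < \<epsilon> \<longrightarrow> \<bar>q - s1\<bar> < \<epsilon> \<longrightarrow> Bprop \<phi> \<phi>' z0 p q"
  shows "Bprop \<phi> \<phi>' z0 0 1"
proof -
  obtain \<epsilon> where \<epsilon>: "\<And>s1. s1 \<in> {0..1} \<Longrightarrow> \<epsilon> s1 > 0 \<and> (\<forall>p q. p \<in> {0..1} \<longrightarrow> q \<in> {0..1} \<longrightarrow> p \<le> q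
      \<longrightarrow> \<bar>p - s1\<bar> < \<epsilon> s1 \<longrightarrow> \<bar>q - s1\<bar> < \<epsilon> s1 \<longrightarrow> Bprop \<phi> \<phi>' z0 p q)"
  proof -
    have "\<forall>s1\<in>{0..1}. \<exists>\<epsilon>>0. \<forall>p q. p \<in> {0..1} \<longrightarrow> q \<in> {0..1} \<longrightarrow> p \<le> q
      \<longrightarrow> \<bar>p - s1\<bar> < \<epsilon> \<longrightarrow> \<bar>q - s1\<bar> < \<epsilon> \<longrightarrow> Bprop \<phi> \<phi>' z0 p q" using loc by blast
    then show ?thesis using that by (subst (asm) bchoice_iff) blast
  qed
  have cov: "{0..1::real} \<subseteq> \<Union> ((\<lambda>s. ball s (\<epsilon> s)) ` {0..1})"
  proof
    fix s :: real assume "s \<in> {0..1}"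
    then have "s \<in> ball s (\<epsilon> s)" using \<epsilon>[of s] by auto
    then show "s \<in> \<Union> ((\<lambda>s. ball s (\<epsilon> s)) ` {0..1})" using \<open>s \<in> {0..1}\<close> by blast
  qed
  obtain e where e: "0 < e" "\<And>x. x \<in> {0..1::real} \<Longrightarrow> \<exists>G \<in> (\<lambda>s. ball s (\<epsilon> s)) ` {0..1}. ball x e \<subseteq> G"
    using Heine_Borel_lemma[OF compact_Icc cov] by blast
  have small: "Bprop \<phi> \<phi>' z0 p q" if "p \<in> {0..1}" "q \<in> {0..1}" "p \<le> q" "q - p < e" for p q
  proof -
    from e(2)[OF that(1)] obtain s1 where s1: "s1 \<in> {0..1}" "ball p e \<subseteq> ball s1 (\<epsilon> s1)" by blast
    have "p \<in> ball p e" "q \<in> ball p e" using e(1) that(3,4) by (auto simp: dist_real_def)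
    then have "p \<in> ball s1 (\<epsilon> s1)" "q \<in> ball s1 (\<epsilon> s1)" using s1(2) by blast+
    then have "\<bar>p - s1\<bar> < \<epsilon> s1" "\<bar>q - s1\<bar> < \<epsilon> s1" by (auto simp: dist_real_def abs_minus_commute)
    then show ?thesis using \<epsilon>[OF s1(1)] that(1-3) by blast
  qed
  have ind: "Bprop \<phi> \<phi>' z0 0 (min 1 (real n * (e/2)))" for n
  proof (induction n)
    case 0 then show ?case by (simp add: Bprop_refl)
  next
    case (Suc n)
    have a: "0 \<le> min 1 (real n * (e/2))" using e by auto
    have b: "min 1 (real n * (e/2)) \<le> min 1 (real (Suc n) * (e/2))" using e
      by (auto simp: field_simps)
    have c: "min 1 (real (Suc n) * (e/2)) - min 1 (real n * (e/2)) < e" using e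
      by (auto simp: field_simps min_def)
    have d: "min 1 (real (Suc n) * (e/2)) \<in> {0..1}" "min 1 (real n * (e/2)) \<in> {0..1}" using e by auto
    show ?case
      using Bprop_combine[OF a b Suc small[OF d(2) d(1) b c]] by simp
  qed
  obtain n where n: "1 \<le> real n * (e/2)"
    using real_arch_simple[of "2/e"] e by (auto simp: field_simps)
  show ?thesis using ind[of n] n by (simp add: min_def)
qed

abbreviation vd :: "(real \<Rightarrow> complex) \<Rightarrow> real \<Rightarrow> complex" where
  "vd \<gamma> s \<equiv> vector_derivative \<gamma> (at s within {0..1})"

lemma vp_deriv:
  assumes "valid_path \<gamma>"
  obtains S where "finite S" "\<And>s. s \<in> {0<..<1} - S \<Longrightarrow> (\<gamma> has_vector_derivative vd \<gamma> s) (at s)"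
proof -
  from assms obtain S D where S: "finite S" and D: "\<forall>x\<in>{0..1}-S. (\<gamma> has_vector_derivative D x) (at x)"
    unfolding valid_path_def piecewise_C1_differentiable_on_def C1_differentiable_on_def by blast
  show ?thesis
  proof (rule that[OF S])
    fix s :: real assume s: "s \<in> {0<..<1} - S"
    then have d: "(\<gamma> has_vector_derivative D s) (at s)" using D by auto
    have "s \<in> interior {0..1::real}" using s by auto
    then have "at s within {0..1} = at s" by (rule at_within_interior)
    then have "vd \<gamma> s = D s" using vector_derivative_at[OF d] by simp
    then show "(\<gamma> has_vector_derivative vd \<gamma> s) (at s)" using d by simp
  qed
qed

lemma vp_cont: "valid_path \<gamma> \<Longrightarrow> continuous_on {0..1} \<gamma>"
  using valid_path_imp_path path_def by blast

definition LP :: "(complex \<Rightarrow> complex) \<Rightarrow> complex \<Rightarrow> complex \<Rightarrow> complex" where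
  "LP f c t = integral {0..1} (\<lambda>\<tau>. f (linepath c t \<tau>) * (t - c))"

lemma LP_primitive:
  fixes f :: "complex \<Rightarrow> complex"
  assumes hol: "f holomorphic_on ball c R"
  obtains g where "\<And>x. x \<in> ball c R \<Longrightarrow> (g has_field_derivative f x) (at x)"
    "\<And>t. t \<in> ball c R \<Longrightarrow> LP f c t = g t - g c"
proof -
  obtain g where g: "\<And>x. x \<in> ball c R \<Longrightarrow> (g has_field_derivative f x) (at x within ball c R)"
    using holomorphic_convex_primitive'[OF convex_ball open_ball hol] by blast
  have g': "(g has_field_derivative f x) (at x)" if "x \<in> ball c R" for x
    using g[OF that] at_within_open[OF that open_ball] by simp
  have "LP f c t = g t - g c" if t: "t \<in> ball c R" for t
  proof -
    have c: "c \<in> ball c R" using t by (simp add: dist_commute le_less_trans[OF zero_le_dist])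
    have ps: "path_image (linepath c t) \<subseteq> ball c R"
      using closed_segment_subset[OF c t convex_ball] by simp
    have "(f has_contour_integral (g t - g c)) (linepath c t)"
      using contour_integral_primitive[OF g valid_path_linepath ps] by simp
    then have "((\<lambda>x. f(linepath c t x) * (t - c)) has_integral (g t - g c)) {0..1}"
      by (simp add: has_contour_integral_linepath)
    then show ?thesis unfolding LP_def by (rule integral_unique)
  qed
  then show ?thesis using that g' by blast
qed

lemma prim_int:
  fixes f :: "complex \<Rightarrow> complex"
  assumes hol: "f holomorphic_on ball c R" and vp: "valid_path \<gamma>"
    and pq: "0 \<le> p" "p \<le> q" "q \<le> 1" and img: "\<gamma> ` {p..q} \<subseteq> ball c R"
  shows "((\<lambda>s. f (\<gamma> s) * vd \<gamma> s) has_integral (LP f c (\<gamma> q) - LP f c (\<gamma> p))) {p..q}"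
proof -
  obtain g where g: "\<And>x. x \<in> ball c R \<Longrightarrow> (g has_field_derivative f x) (at x)"
    and LPg: "\<And>t. t \<in> ball c R \<Longrightarrow> LP f c t = g t - g c"
    using LP_primitive[OF hol] by blast
  obtain S where S: "finite S" "\<And>s. s \<in> {0<..<1} - S \<Longrightarrow> (\<gamma> has_vector_derivative vd \<gamma> s) (at s)"
    using vp_deriv[OF vp] by blast
  have "((\<lambda>s. vd \<gamma> s * f (\<gamma> s)) has_integral ((g \<circ> \<gamma>) q - (g \<circ> \<gamma>) p)) {p..q}"
  proof (rule fundamental_theorem_of_calculus_interior_strong[OF S(1) pq(2)])
    fix s assume s: "s \<in> {p<..<q} - S"
    then have s01: "s \<in> {0<..<1} - S" using pq by auto
    have "s \<in> {p..q}" using s by auto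
    then have "\<gamma> s \<in> ball c R" using img by blast
    then show "((g \<circ> \<gamma>) has_vector_derivative vd \<gamma> s * f (\<gamma> s)) (at s)"
      by (rule field_vector_diff_chain_at[OF S(2)[OF s01] g])
  next
    have "continuous_on (ball c R) g"
      using g by (meson DERIV_isCont continuous_at_imp_continuous_on)
    moreover have "continuous_on {p..q} \<gamma>"
      using vp_cont[OF vp] by (rule continuous_on_subset) (use pq in auto)
    ultimately show "continuous_on {p..q} (g \<circ> \<gamma>)"
      using continuous_on_compose continuous_on_subset img by blast
  qed
  moreover have "(g \<circ> \<gamma>) q - (g \<circ> \<gamma>) p = LP f c (\<gamma> q) - LP f c (\<gamma> p)"
  proof -
    have "q \<in> {p..q}" "p \<in> {p..q}" using pq by auto
    then have "\<gamma> q \<in> ball c R" "\<gamma> p \<in> ball c R" using img by blast+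
    then show ?thesis using LPg[of "\<gamma> q"] LPg[of "\<gamma> p"] by simp
  qed
  ultimately show ?thesis by (simp add: mult.commute)
qed

lemma LP_deriv:
  fixes F F1 :: "complex \<Rightarrow> complex \<Rightarrow> complex"
  assumes Z: "open Z" "convex Z" "z0 \<in> Z" and t: "t \<in> ball c R"
    and dF: "\<And>z w. z \<in> Z \<Longrightarrow> w \<in> ball c R \<Longrightarrow> ((\<lambda>z. F z w) has_field_derivative F1 z w) (at z)"
    and cF1: "continuous_on (Z \<times> ball c R) (\<lambda>(z,w). F1 z w)"
    and cF: "\<And>z. z \<in> Z \<Longrightarrow> continuous_on (ball c R) (F z)"
  shows "((\<lambda>z. LP (F z) c t) has_field_derivative LP (F1 z0) c t) (at z0)"
proof -
  have c: "c \<in> ball c R" using t by (simp add: dist_commute le_less_trans[OF zero_le_dist])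
  have lp: "linepath c t \<tau> \<in> ball c R" if "\<tau> \<in> {0..1}" for \<tau>
    using closed_segment_subset[OF c t convex_ball] that
    by (metis linepath_in_path path_image_linepath subsetD)
  have cl: "continuous_on {0..1} (linepath c t)" by (intro continuous_intros)
  have "((\<lambda>z. integral (cbox 0 1) (\<lambda>\<tau>. F z (linepath c t \<tau>) * (t - c))) has_field_derivative
          integral (cbox 0 1) (\<lambda>\<tau>. F1 z0 (linepath c t \<tau>) * (t - c))) (at z0 within Z)"
  proof (rule leibniz_rule_field_derivative[OF _ _ _ Z(3,2)])
    fix z and \<tau> :: real assume a: "z \<in> Z" "\<tau> \<in> cbox 0 1"
    have "linepath c t \<tau> \<in> ball c R" using lp a(2) by simp
    from DERIV_cmult_right[OF dF[OF a(1) this], of "t - c"]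
    show "((\<lambda>z. F z (linepath c t \<tau>) * (t - c)) has_field_derivative F1 z (linepath c t \<tau>) * (t - c)) (at z within Z)"
      by (rule has_field_derivative_at_within)
  next
    fix z assume z: "z \<in> Z"
    have "continuous_on {0..1} (\<lambda>\<tau>. F z (linepath c t \<tau>) * (t - c))"
      by (intro continuous_intros continuous_on_compose2[OF cF[OF z] cl]) (use lp in auto)
    then show "(\<lambda>\<tau>. F z (linepath c t \<tau>) * (t - c)) integrable_on cbox 0 1"
      by (simp add: integrable_continuous_real)
  next
    have "continuous_on (Z \<times> cbox 0 1) (\<lambda>(z, \<tau>). F1 z (linepath c t \<tau>))"
    proof -
      have "continuous_on (Z \<times> cbox 0 1) (\<lambda>(z, \<tau>). (z, linepath c t \<tau>))"
        by (auto simp: split_beta linepath_def intro!: continuous_intros)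
      moreover have "(\<lambda>(z, \<tau>). (z, linepath c t \<tau>)) ` (Z \<times> cbox 0 1) \<subseteq> Z \<times> ball c R"
        using lp by auto
      ultimately show ?thesis
        using continuous_on_compose2[OF cF1, of "Z \<times> cbox 0 1" "\<lambda>(z, \<tau>). (z, linepath c t \<tau>)"]
        by (simp add: split_beta)
    qed
    then show "continuous_on (Z \<times> cbox 0 1) (\<lambda>(z, \<tau>). F1 z (linepath c t \<tau>) * (t - c))"
      by (auto simp: split_beta intro!: continuous_intros)
  qed
  then show ?thesis
    unfolding LP_def using at_within_open[OF Z(3,1)] by simp
qed

lemma branch_ev:
  fixes l w :: "'a \<Rightarrow> complex"
  assumes l: "(l \<longlongrightarrow> l0) F" and w: "(w \<longlongrightarrow> w0) F" and w0: "w0 \<noteq> 0"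
    and ex: "\<forall>\<^sub>F x in F. exp (l x) = w x" and ex0: "exp l0 = w0"
  shows "\<forall>\<^sub>F x in F. l x = l0 + Ln (w x / w0)"
proof -
  have "((\<lambda>x. w x / w0) \<longlongrightarrow> w0 / w0) F" using w by (intro tendsto_intros) (use w0 in auto)
  then have r: "((\<lambda>x. w x / w0) \<longlongrightarrow> 1) F" using w0 by simp
  have c1: "isCont Ln 1" by (rule continuous_at_Ln) (auto simp: nonpos_Reals_def)
  have "((\<lambda>x. Ln (w x / w0)) \<longlongrightarrow> Ln 1) F" by (rule isCont_tendsto_compose[OF c1 r])
  then have "((\<lambda>x. l x - l0 - Ln (w x / w0)) \<longlongrightarrow> l0 - l0 - 0) F"
    using l by (intro tendsto_intros) auto
  then have "((\<lambda>x. norm (l x - l0 - Ln (w x / w0))) \<longlongrightarrow> 0) F"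
    using tendsto_norm_zero by force
  then have e1: "\<forall>\<^sub>F x in F. norm (l x - l0 - Ln (w x / w0)) < 1"
    by (rule order_tendstoD) simp
  have e2: "\<forall>\<^sub>F x in F. w x \<noteq> 0" using tendsto_imp_eventually_ne[OF w w0] .
  show ?thesis using eventually_conj[OF e1 eventually_conj[OF e2 ex]]
  proof (rule eventually_mono)
    fix x assume h: "norm (l x - l0 - Ln (w x / w0)) < 1 \<and> w x \<noteq> 0 \<and> exp (l x) = w x"
    define d where "d = l x - l0 - Ln (w x / w0)"
    have "exp d = exp (l x) / (exp l0 * exp (Ln (w x / w0)))"
      unfolding d_def by (simp add: exp_diff)
    also have "\<dots> = 1" using h w0 ex0 by (simp add: exp_Ln)
    finally have "exp d = 1" .
    then obtain n :: int where n: "Re d = 0" "Im d = real_of_int (2 * n) * pi"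
      unfolding exp_eq_1 by blast
    have "\<bar>Im d\<bar> < 1" using h abs_Im_le_cmod[of d] unfolding d_def by linarith
    then have "\<bar>real_of_int (2 * n) * pi\<bar> < 1" using n by simp
    then have "n = 0"
    proof (cases "n = 0")
      case False
      then have "1 \<le> \<bar>real_of_int (2 * n)\<bar>" by linarith
      then have "pi \<le> \<bar>real_of_int (2 * n)\<bar> * pi" by simp
      then have "pi \<le> \<bar>real_of_int (2 * n) * pi\<bar>" by (simp add: abs_mult)
      then show ?thesis using \<open>\<bar>real_of_int (2 * n) * pi\<bar> < 1\<close> pi_gt3 by linarith
    qed
    then have "d = 0" using n by (simp add: complex_eq_iff)
    then show "l x = l0 + Ln (w x / w0)" unfolding d_def by (simp add: algebra_simps)
  qed
qed

lemma pw_bound: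
  assumes "w \<noteq> 0 \<Longrightarrow> exp l = w" and "\<bar>Im l\<bar> \<le> B"
  shows "cmod (pw w l c) \<le> cmod w powr Re c * exp (\<bar>Im c\<bar> * B)"
proof (cases "w = 0")
  case True then show ?thesis by (simp add: pw_def)
next
  case False
  then have ew: "exp l = w" using assms(1) by simp
  have rl: "Re l = ln (cmod w)" using ew by (metis ln_exp norm_exp_eq_Re)
  have "cmod (pw w l c) = exp (Re c * Re l - Im c * Im l)"
    using False by (simp add: pw_def norm_exp_eq_Re)
  also have "\<dots> \<le> exp (Re c * Re l + \<bar>Im c\<bar> * B)"
  proof -
    have "- (Im c * Im l) \<le> \<bar>Im c\<bar> * B"
    proof -
      have "- (Im c * Im l) \<le> \<bar>Im c * Im l\<bar>" by (rule abs_ge_minus_self)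
      also have "\<dots> = \<bar>Im c\<bar> * \<bar>Im l\<bar>" by (rule abs_mult)
      also have "\<dots> \<le> \<bar>Im c\<bar> * B" using assms(2) by (rule mult_left_mono) simp
      finally show ?thesis .
    qed
    then show ?thesis by simp
  qed
  also have "\<dots> = cmod w powr Re c * exp (\<bar>Im c\<bar> * B)"
    using False rl by (simp add: powr_def exp_add mult.commute)
  finally show ?thesis .
qed

lemma lt_local:
  fixes \<gamma> lt :: "real \<Rightarrow> complex"
  assumes s1: "s1 \<in> {0..1}" "\<gamma> s1 \<noteq> 0" and vp: "valid_path \<gamma>"
    and ltc: "continuous_on {s\<in>{0..1}. \<gamma> s \<noteq> 0} lt"
    and ltl: "\<forall>s\<in>{0..1}. \<gamma> s \<noteq> 0 \<longrightarrow> exp (lt s) = \<gamma> s"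
  shows "\<exists>d>0. \<forall>s\<in>{0..1}. \<bar>s - s1\<bar> < d \<longrightarrow> \<gamma> s \<noteq> 0 \<and> lt s = lt s1 + Ln (\<gamma> s / \<gamma> s1)"
proof -
  define T where "T = {s\<in>{0..1}. \<gamma> s \<noteq> 0}"
  have s1T: "s1 \<in> T" using s1 by (simp add: T_def)
  have gc: "continuous_on {0..1} \<gamma>" using vp_cont[OF vp] .
  have l: "(lt \<longlongrightarrow> lt s1) (at s1 within T)"
    using ltc s1T unfolding T_def continuous_on_def by blast
  have g: "(\<gamma> \<longlongrightarrow> \<gamma> s1) (at s1 within T)"
  proof -
    have "(\<gamma> \<longlongrightarrow> \<gamma> s1) (at s1 within {0..1})" using gc s1(1) unfolding continuous_on_def by blast
    then show ?thesis by (rule tendsto_within_subset) (auto simp: T_def)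
  qed
  have ex: "\<forall>\<^sub>F x in at s1 within T. exp (lt x) = \<gamma> x"
    unfolding eventually_at_filter by (rule always_eventually) (auto simp: T_def ltl)
  have "\<forall>\<^sub>F x in at s1 within T. lt x = lt s1 + Ln (\<gamma> x / \<gamma> s1)"
    by (rule branch_ev[OF l g s1(2) ex]) (use ltl s1 in auto)
  then obtain d1 where d1: "d1 > 0" "\<And>x. x \<in> T \<Longrightarrow> x \<noteq> s1 \<Longrightarrow> dist x s1 < d1 \<Longrightarrow> lt x = lt s1 + Ln (\<gamma> x / \<gamma> s1)"
    unfolding eventually_at by blast
  obtain d2 where d2: "d2 > 0" "\<And>x. x \<in> {0..1} \<Longrightarrow> dist x s1 < d2 \<Longrightarrow> dist (\<gamma> x) (\<gamma> s1) < cmod (\<gamma> s1)"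
  proof -
    have "cmod (\<gamma> s1) > 0" using s1 by simp
    from gc[unfolded continuous_on_iff, rule_format, OF s1(1) this] show ?thesis using that by blast
  qed
  show ?thesis
  proof (intro exI[of _ "min d1 d2"] conjI allI impI ballI)
    show "0 < min d1 d2" using d1 d2 by simp
  next
    fix s :: real assume s: "s \<in> {0..1}" "\<bar>s - s1\<bar> < min d1 d2"
    have "dist (\<gamma> s) (\<gamma> s1) < cmod (\<gamma> s1)" using d2(2)[OF s(1)] s(2) by (simp add: dist_real_def)
    then show gs: "\<gamma> s \<noteq> 0" by auto
    show "lt s = lt s1 + Ln (\<gamma> s / \<gamma> s1)"
    proof (cases "s = s1")
      case True then show ?thesis using s1 by simp
    next
      case False
      then show ?thesis using d1(2)[of s] s gs by (simp add: T_def dist_real_def)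
    qed
  qed
qed

lemma lt_deriv:
  fixes \<gamma> lt :: "real \<Rightarrow> complex"
  assumes s: "s \<in> {0<..<1}" "\<gamma> s \<noteq> 0" and D: "(\<gamma> has_vector_derivative D) (at s)"
    and vp: "valid_path \<gamma>"
    and ltc: "continuous_on {s\<in>{0..1}. \<gamma> s \<noteq> 0} lt"
    and ltl: "\<forall>s\<in>{0..1}. \<gamma> s \<noteq> 0 \<longrightarrow> exp (lt s) = \<gamma> s"
  shows "(lt has_vector_derivative D / \<gamma> s) (at s)"
proof -
  obtain d where d: "d > 0" "\<And>x. x \<in> {0..1} \<Longrightarrow> \<bar>x - s\<bar> < d \<Longrightarrow> \<gamma> x \<noteq> 0 \<and> lt x = lt s + Ln (\<gamma> x / \<gamma> s)"
  proof -
    have "s \<in> {0..1}" using s by auto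
    from lt_local[OF this s(2) vp ltc ltl] show ?thesis using that by blast
  qed
  define e where "e = min d (min s (1 - s))"
  have e: "e > 0" using d s by (simp add: e_def)
  have hg: "((\<lambda>z. lt s + Ln (z / \<gamma> s)) has_field_derivative inverse (\<gamma> s / \<gamma> s) * (1 / \<gamma> s)) (at (\<gamma> s))"
  proof -
    have "((\<lambda>z. z / \<gamma> s) has_field_derivative 1 / \<gamma> s) (at (\<gamma> s))"
      using DERIV_cdivide[OF DERIV_ident, of "\<gamma> s" "\<gamma> s"] by simp
    moreover have "(Ln has_field_derivative inverse (\<gamma> s / \<gamma> s)) (at (\<gamma> s / \<gamma> s))"
      using s(2) by (intro has_field_derivative_Ln) (simp add: nonpos_Reals_def)
    ultimately have "((\<lambda>z. Ln (z / \<gamma> s)) has_field_derivative inverse (\<gamma> s / \<gamma> s) * (1 / \<gamma> s)) (at (\<gamma> s))"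
      by (rule DERIV_chain2[rotated])
    from DERIV_add[OF DERIV_const[of "lt s"] this] show ?thesis by simp
  qed
  have "((\<lambda>x. lt s + Ln (\<gamma> x / \<gamma> s)) has_vector_derivative D * (inverse (\<gamma> s / \<gamma> s) * (1 / \<gamma> s))) (at s)"
    using field_vector_diff_chain_at[OF D hg] by (simp add: o_def)
  then have "((\<lambda>x. lt s + Ln (\<gamma> x / \<gamma> s)) has_vector_derivative D / \<gamma> s) (at s)"
    using s(2) by (simp add: field_simps)
  then show ?thesis
  proof (rule has_vector_derivative_transform_within_open[of _ _ _ "ball s e"])
    show "open (ball s e)" by simp
    show "s \<in> ball s e" using e by simp
  next
    fix y assume "y \<in> ball s e"
    then have "y \<in> {0..1}" "\<bar>y - s\<bar> < d" using s unfolding e_def by (auto simp: dist_real_def)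
    then show "lt s + Ln (\<gamma> y / \<gamma> s) = lt y" using d(2) by simp
  qed
qed

abbreviation rp :: "complex \<Rightarrow> real \<Rightarrow> complex" where
  "rp \<mu> \<rho> \<equiv> (of_real \<rho> :: complex) powr \<mu>"

definition Psi :: "complex \<Rightarrow> (complex \<Rightarrow> complex) \<Rightarrow> complex \<Rightarrow> complex" where
  "Psi \<mu> h t = integral {0..1} (\<lambda>\<rho>. rp \<mu> \<rho> * h (of_real \<rho> * t))"

definition Psid :: "complex \<Rightarrow> (complex \<Rightarrow> complex) \<Rightarrow> complex \<Rightarrow> complex" where
  "Psid \<mu> h t = integral {0..1} (\<lambda>\<rho>. rp \<mu> \<rho> * of_real \<rho> * deriv h (of_real \<rho> * t))"

lemma rp_cont: "Re \<mu> > 0 \<Longrightarrow> S \<subseteq> {0..} \<Longrightarrow> continuous_on S (rp \<mu>)"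
  by (rule continuous_on_powr_complex) (auto intro!: continuous_intros)

lemma rp_cont': "Re \<mu> > 0 \<Longrightarrow> continuous_on S (\<lambda>x. rp \<mu> (f x))"
  if "continuous_on S f" "f ` S \<subseteq> {0..}"
  using continuous_on_compose2[OF rp_cont[of \<mu> "{0..}"] that(1)] that(2) by auto

lemma ball_scale: "t \<in> ball 0 R \<Longrightarrow> \<rho> \<in> {0..1} \<Longrightarrow> of_real \<rho> * t \<in> ball (0::complex) R"
proof -
  assume t: "t \<in> ball 0 R" and r: "\<rho> \<in> {0..1}"
  have "cmod (of_real \<rho> * t) = \<rho> * cmod t" using r by (simp add: norm_mult)
  also have "\<dots> \<le> cmod t" using r by (simp add: mult_left_le_one_le)
  finally show ?thesis using t by simp
qed

lemma Psi_deriv: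
  fixes h :: "complex \<Rightarrow> complex" and t :: complex
  assumes hol: "h holomorphic_on ball 0 R" and mu: "Re \<mu> > 0" and t: "t \<in> ball 0 R"
  shows "(Psi \<mu> h has_field_derivative Psid \<mu> h t) (at t)"
proof -
  have dh: "(h has_field_derivative deriv h w) (at w)" if "w \<in> ball 0 R" for w
    using holomorphic_derivI[OF hol open_ball that] .
  have cdh: "continuous_on (ball 0 R) (deriv h)"
    using holomorphic_deriv[OF hol open_ball] by (rule holomorphic_on_imp_continuous_on)
  have ch: "continuous_on (ball 0 R) h" using hol by (rule holomorphic_on_imp_continuous_on)
  have "((\<lambda>t. integral (cbox 0 1) (\<lambda>\<rho>. rp \<mu> \<rho> * h (of_real \<rho> * t))) has_field_derivative
        integral (cbox 0 1) (\<lambda>\<rho>. rp \<mu> \<rho> * of_real \<rho> * deriv h (of_real \<rho> * t))) (at t within ball 0 R)"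
  proof (rule leibniz_rule_field_derivative[OF _ _ _ t convex_ball])
    fix x :: complex and \<rho> :: real assume a: "x \<in> ball 0 R" "\<rho> \<in> cbox 0 1"
    have w: "of_real \<rho> * x \<in> ball 0 R" using ball_scale a by auto
    have "((\<lambda>x. of_real \<rho> * x) has_field_derivative of_real \<rho>) (at x)"
      using DERIV_cmult_Id[of "of_real \<rho>" x] by simp
    from DERIV_chain2[OF dh[OF w] this]
    have "((\<lambda>x. h (of_real \<rho> * x)) has_field_derivative deriv h (of_real \<rho> * x) * of_real \<rho>) (at x)" .
    from DERIV_cmult[OF this, of "rp \<mu> \<rho>"]
    have "((\<lambda>x. rp \<mu> \<rho> * h (of_real \<rho> * x)) has_field_derivative rp \<mu> \<rho> * (deriv h (of_real \<rho> * x) * of_real \<rho>)) (at x)" .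
    moreover have "rp \<mu> \<rho> * (deriv h (of_real \<rho> * x) * of_real \<rho>) = rp \<mu> \<rho> * of_real \<rho> * deriv h (of_real \<rho> * x)"
      by (simp only: mult_ac)
    ultimately show "((\<lambda>x. rp \<mu> \<rho> * h (of_real \<rho> * x)) has_field_derivative rp \<mu> \<rho> * of_real \<rho> * deriv h (of_real \<rho> * x)) (at x within ball 0 R)"
      by (metis has_field_derivative_at_within)
  next
    fix x :: complex assume x: "x \<in> ball 0 R"
    have "continuous_on {0..1} (\<lambda>\<rho>. h (of_real \<rho> * x))"
      by (rule continuous_on_compose2[OF ch]) (auto intro!: continuous_intros ball_scale x)
    then have "continuous_on {0..1} (\<lambda>\<rho>. rp \<mu> \<rho> * h (of_real \<rho> * x))"
      using rp_cont[OF mu, of "{0..1}"] mu by (intro continuous_intros) auto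
    then show "(\<lambda>\<rho>. rp \<mu> \<rho> * h (of_real \<rho> * x)) integrable_on cbox 0 1"
      by (simp add: integrable_continuous_real)
  next
    have c1: "continuous_on (ball 0 R \<times> cbox 0 1) (\<lambda>(x::complex, \<rho>::real). deriv h (of_real \<rho> * x))"
    proof -
      have "continuous_on (ball 0 R \<times> cbox 0 1) (\<lambda>(x::complex, \<rho>::real). of_real \<rho> * x)"
        by (auto simp: split_beta intro!: continuous_intros)
      moreover have "(\<lambda>(x::complex, \<rho>::real). of_real \<rho> * x) ` (ball 0 R \<times> cbox 0 1) \<subseteq> ball 0 R"
        using ball_scale by auto
      ultimately show ?thesis
        using continuous_on_compose2[OF cdh, of "ball 0 R \<times> cbox 0 1" "\<lambda>(x, \<rho>::real). of_real \<rho> * x"]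
        by (simp add: split_beta)
    qed
    have c2: "continuous_on (ball 0 R \<times> cbox 0 1) (\<lambda>(x::complex, \<rho>::real). rp \<mu> \<rho>)"
    proof -
      have sub: "snd ` (ball (0::complex) R \<times> cbox 0 (1::real)) \<subseteq> {0..}" by (auto simp: box_real)
      have cs: "continuous_on (ball (0::complex) R \<times> cbox 0 (1::real)) snd" by (intro continuous_intros)
      have "continuous_on (ball 0 R \<times> cbox 0 1) (\<lambda>x::complex\<times>real. rp \<mu> (snd x))"
        by (rule rp_cont'[OF cs sub mu])
      then show ?thesis by (simp add: case_prod_beta)
    qed
    show "continuous_on (ball 0 R \<times> cbox 0 1) (\<lambda>(x, \<rho>). rp \<mu> \<rho> * of_real \<rho> * deriv h (of_real \<rho> * x))"
      using continuous_on_mult[OF continuous_on_mult[OF c2 continuous_on_of_real[OF continuous_on_snd[OF continuous_on_id]]] c1]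
      by (simp add: split_beta)
  qed
  then show ?thesis
    unfolding Psi_def Psid_def using at_within_open[OF t open_ball] by (simp add: fun_eq_iff)
qed

lemma Psi_cont_int:
  fixes h :: "complex \<Rightarrow> complex" and t :: complex
  assumes ch: "continuous_on (ball 0 R) h" and mu: "Re \<mu> > 0" and t: "t \<in> ball 0 R"
  shows "continuous_on {0..1} (\<lambda>\<rho>. rp \<mu> \<rho> * h (of_real \<rho> * t))"
proof -
  have "continuous_on {0..1} (\<lambda>\<rho>. h (of_real \<rho> * t))"
    by (rule continuous_on_compose2[OF ch]) (auto intro!: continuous_intros ball_scale t)
  then show ?thesis
    using rp_cont[OF mu, of "{0..1}"] mu by (intro continuous_intros) auto
qed

lemma Psi_ode:
  fixes h :: "complex \<Rightarrow> complex" and t :: complex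
  assumes hol: "h holomorphic_on ball 0 R" and mu: "Re \<mu> > 0" and t: "t \<in> ball 0 R"
  shows "(\<mu> + 1) * Psi \<mu> h t + t * Psid \<mu> h t = h t"
proof -
  have dh: "(h has_field_derivative deriv h w) (at w)" if "w \<in> ball 0 R" for w
    using holomorphic_derivI[OF hol open_ball that] .
  have cdh: "continuous_on (ball 0 R) (deriv h)"
    using holomorphic_deriv[OF hol open_ball] by (rule holomorphic_on_imp_continuous_on)
  have ch: "continuous_on (ball 0 R) h" using hol by (rule holomorphic_on_imp_continuous_on)
  have mu1: "Re (\<mu> + 1) > 0" using mu by simp
  define G where "G \<rho> = rp (\<mu> + 1) \<rho> * h (of_real \<rho> * t)" for \<rho>
  define G' where "G' \<rho> = (\<mu> + 1) * (rp \<mu> \<rho> * h (of_real \<rho> * t)) + t * (rp \<mu> \<rho> * of_real \<rho> * deriv h (of_real \<rho> * t))" for \<rho>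
  have "(G' has_integral (G 1 - G 0)) {0..1}"
  proof (rule fundamental_theorem_of_calculus_interior_strong[of "{}"])
    fix \<rho> :: real assume r: "\<rho> \<in> {0<..<1} - {}"
    have w: "of_real \<rho> * t \<in> ball 0 R" using ball_scale[OF t, of \<rho>] r by auto
    have "((\<lambda>z. z powr (\<mu> + 1)) has_field_derivative (\<mu> + 1) * of_real \<rho> powr (\<mu> + 1 - 1)) (at (of_real \<rho>))"
      by (rule has_field_derivative_powr) (use r in \<open>auto simp: nonpos_Reals_def\<close>)
    from has_vector_derivative_real_field[OF this]
    have d1: "(rp (\<mu> + 1) has_vector_derivative (\<mu> + 1) * rp \<mu> \<rho>) (at \<rho>)" by simp
    have "((\<lambda>z. z * t) has_field_derivative t) (at (of_real \<rho>))"
      using DERIV_cmult_right[OF DERIV_ident, of t "of_real \<rho>"] by simp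
    from has_vector_derivative_real_field[OF this]
    have "((\<lambda>x. of_real x * t) has_vector_derivative t) (at \<rho>)" by simp
    from field_vector_diff_chain_at[OF this dh[OF w]]
    have d2: "((\<lambda>x. h (of_real x * t)) has_vector_derivative t * deriv h (of_real \<rho> * t)) (at \<rho>)"
      by (simp add: o_def)
    from has_vector_derivative_mult[OF d1 d2]
    have "(G has_vector_derivative rp (\<mu> + 1) \<rho> * (t * deriv h (of_real \<rho> * t)) + (\<mu> + 1) * rp \<mu> \<rho> * h (of_real \<rho> * t)) (at \<rho>)"
      unfolding G_def .
    moreover have "rp (\<mu> + 1) \<rho> = rp \<mu> \<rho> * of_real \<rho>"
      using r by (simp add: powr_add)
    ultimately show "(G has_vector_derivative G' \<rho>) (at \<rho>)"
      unfolding G'_def by (simp add: algebra_simps)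
  next
    have "continuous_on {0..1} (\<lambda>\<rho>. h (of_real \<rho> * t))"
      by (rule continuous_on_compose2[OF ch]) (auto intro!: continuous_intros ball_scale t)
    then show "continuous_on {0..1} G"
      unfolding G_def using rp_cont[OF mu1, of "{0..1}"] mu by (intro continuous_intros) auto
  qed auto
  moreover have "G 1 - G 0 = h t" by (simp add: G_def)
  ultimately have I: "(G' has_integral h t) {0..1}" by simp
  have i1: "(\<lambda>\<rho>. rp \<mu> \<rho> * h (of_real \<rho> * t)) integrable_on {0..1}"
    using Psi_cont_int[OF ch mu t] by (simp add: integrable_continuous_real)
  have "continuous_on {0..1} (\<lambda>\<rho>. rp \<mu> \<rho> * of_real \<rho> * deriv h (of_real \<rho> * t))"
  proof -
    have "continuous_on {0..1} (\<lambda>\<rho>. deriv h (of_real \<rho> * t))"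
      by (rule continuous_on_compose2[OF cdh]) (auto intro!: continuous_intros ball_scale t)
    then show ?thesis using rp_cont[OF mu, of "{0..1}"] mu by (intro continuous_intros) auto
  qed
  then have i2: "(\<lambda>\<rho>. rp \<mu> \<rho> * of_real \<rho> * deriv h (of_real \<rho> * t)) integrable_on {0..1}"
    by (simp add: integrable_continuous_real)
  have "integral {0..1} G' = (\<mu> + 1) * Psi \<mu> h t + t * Psid \<mu> h t"
    unfolding G'_def Psi_def Psid_def
    using integral_add[OF integrable_on_mult_right[OF i1] integrable_on_mult_right[OF i2]]
    by (simp add: integral_mult_right)
  with I show ?thesis using integral_unique by metis
qed

lemma pw_cont_at:
  fixes \<gamma> lt :: "real \<Rightarrow> complex"
  assumes s0: "s0 \<in> {0..1}" and vp: "valid_path \<gamma>"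
    and ltc: "continuous_on {s\<in>{0..1}. \<gamma> s \<noteq> 0} lt"
    and ltl: "\<forall>s\<in>{0..1}. \<gamma> s \<noteq> 0 \<longrightarrow> exp (lt s) = \<gamma> s"
    and ltb: "bounded (Im ` lt ` {s\<in>{0..1}. \<gamma> s \<noteq> 0})"
    and c: "Re c > 0"
  shows "continuous (at s0 within {0..1}) (\<lambda>s. pw (\<gamma> s) (lt s) c)"
proof -
  have gc: "continuous (at s0 within {0..1}) \<gamma>"
    using vp_cont[OF vp] s0 continuous_on_eq_continuous_within by blast
  show ?thesis
  proof (cases "\<gamma> s0 = 0")
    case False
    obtain d where d: "d > 0" "\<And>x. x \<in> {0..1} \<Longrightarrow> \<bar>x - s0\<bar> < d \<Longrightarrow> \<gamma> x \<noteq> 0 \<and> lt x = lt s0 + Ln (\<gamma> x / \<gamma> s0)"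
      using lt_local[OF s0 False vp ltc ltl] by blast
    have c1: "continuous (at s0 within {0..1}) (\<lambda>s. \<gamma> s / \<gamma> s0)"
      using gc False by (intro continuous_intros) auto
    have "isCont Ln (\<gamma> s0 / \<gamma> s0)" using False by (intro continuous_at_Ln) (simp add: nonpos_Reals_def)
    from continuous_within_compose3[OF this c1]
    have "continuous (at s0 within {0..1}) (\<lambda>s. Ln (\<gamma> s / \<gamma> s0))" .
    then have "continuous (at s0 within {0..1}) (\<lambda>s. exp (c * (lt s0 + Ln (\<gamma> s / \<gamma> s0))))"
      by (intro continuous_intros)
    then show ?thesis
    proof (rule continuous_transform_within[OF _ d(1) s0])
      fix x assume x: "x \<in> {0..1}" "dist x s0 < d"
      then show "exp (c * (lt s0 + Ln (\<gamma> x / \<gamma> s0))) = pw (\<gamma> x) (lt x) c"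
        using d(2)[OF x(1)] by (simp add: pw_def dist_real_def)
    qed
  next
    case True
    obtain B where B: "\<And>s. s \<in> {0..1} \<Longrightarrow> \<gamma> s \<noteq> 0 \<Longrightarrow> \<bar>Im (lt s)\<bar> \<le> B"
      using ltb unfolding bounded_iff by fastforce
    have "((\<lambda>s. pw (\<gamma> s) (lt s) c) \<longlongrightarrow> 0) (at s0 within {0..1})"
    proof (rule Lim_null_comparison)
      show "\<forall>\<^sub>F x::real in at s0 within {0..1}. cmod (pw (\<gamma> x) (lt x) c) \<le> cmod (\<gamma> x) powr Re c * exp (\<bar>Im c\<bar> * B)"
        unfolding eventually_at_filter
      proof (rule always_eventually, intro allI impI)
        fix x :: real assume x: "x \<in> {0..1}"
        show "cmod (pw (\<gamma> x) (lt x) c) \<le> cmod (\<gamma> x) powr Re c * exp (\<bar>Im c\<bar> * B)"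
        proof (cases "\<gamma> x = 0")
          case True then show ?thesis by (simp add: pw_def)
        next
          case False
          then show ?thesis using pw_bound[of "\<gamma> x" "lt x" B c] ltl x B[OF x False] by simp
        qed
      qed
    next
      have "((\<lambda>x::real. cmod (\<gamma> x)) \<longlongrightarrow> cmod (\<gamma> s0)) (at s0 within {0..1})"
        using gc unfolding continuous_within by (intro tendsto_intros)
      then have "((\<lambda>x. cmod (\<gamma> x)) \<longlongrightarrow> 0) (at s0 within {0..1})" using True by simp
      then have "((\<lambda>x. cmod (\<gamma> x) powr Re c) \<longlongrightarrow> 0) (at s0 within {0..1})"
        by (rule tendsto_zero_powrI) (use c in auto)
      then show "((\<lambda>x. cmod (\<gamma> x) powr Re c * exp (\<bar>Im c\<bar> * B)) \<longlongrightarrow> 0) (at s0 within {0..1})"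
        by (rule tendsto_mult_left_zero)
    qed
    then show ?thesis unfolding continuous_within using True by (simp add: pw_def)
  qed
qed

lemma pw_cont_on:
  fixes \<gamma> lt :: "real \<Rightarrow> complex"
  assumes vp: "valid_path \<gamma>"
    and ltc: "continuous_on {s\<in>{0..1}. \<gamma> s \<noteq> 0} lt"
    and ltl: "\<forall>s\<in>{0..1}. \<gamma> s \<noteq> 0 \<longrightarrow> exp (lt s) = \<gamma> s"
    and ltb: "bounded (Im ` lt ` {s\<in>{0..1}. \<gamma> s \<noteq> 0})"
    and c: "Re c > 0" and S: "S \<subseteq> {0..1}"
  shows "continuous_on S (\<lambda>s. pw (\<gamma> s) (lt s) c)"
  unfolding continuous_on_eq_continuous_within
proof
  fix x assume "x \<in> S"
  then have "x \<in> {0..1}" using S by auto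
  from pw_cont_at[OF this vp ltc ltl ltb c]
  show "continuous (at x within S) (\<lambda>s. pw (\<gamma> s) (lt s) c)"
    by (rule continuous_within_subset) (rule S)
qed

definition Qf :: "complex \<Rightarrow> (complex \<Rightarrow> complex) \<Rightarrow> (real \<Rightarrow> complex) \<Rightarrow> (real \<Rightarrow> complex) \<Rightarrow> real \<Rightarrow> complex" where
  "Qf \<mu> h \<gamma> lt s = pw (\<gamma> s) (lt s) (\<mu> + 1) * Psi \<mu> h (\<gamma> s)"

lemma Psi_cont_on:
  fixes h :: "complex \<Rightarrow> complex"
  assumes hol: "h holomorphic_on ball 0 R" and mu: "Re \<mu> > 0"
  shows "continuous_on (ball 0 R) (Psi \<mu> h)"
  using Psi_deriv[OF hol mu] by (meson DERIV_isCont continuous_at_imp_continuous_on)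

lemma prim_0:
  fixes \<gamma> lt :: "real \<Rightarrow> complex" and h :: "complex \<Rightarrow> complex"
  assumes hol: "h holomorphic_on ball 0 R" and mu: "Re \<mu> > 0" and vp: "valid_path \<gamma>"
    and pq: "0 \<le> p" "p \<le> q" "q \<le> 1" and img: "\<gamma> ` {p..q} \<subseteq> ball 0 R"
    and nz: "\<forall>s\<in>{0<..<1}. \<gamma> s \<noteq> 0"
    and ltc: "continuous_on {s\<in>{0..1}. \<gamma> s \<noteq> 0} lt"
    and ltl: "\<forall>s\<in>{0..1}. \<gamma> s \<noteq> 0 \<longrightarrow> exp (lt s) = \<gamma> s"
    and ltb: "bounded (Im ` lt ` {s\<in>{0..1}. \<gamma> s \<noteq> 0})"
  shows "((\<lambda>s. pw (\<gamma> s) (lt s) \<mu> * h (\<gamma> s) * vd \<gamma> s) has_integral (Qf \<mu> h \<gamma> lt q - Qf \<mu> h \<gamma> lt p)) {p..q}"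
proof -
  obtain S where S: "finite S" "\<And>s. s \<in> {0<..<1} - S \<Longrightarrow> (\<gamma> has_vector_derivative vd \<gamma> s) (at s)"
    using vp_deriv[OF vp] by blast
  show ?thesis
  proof (rule fundamental_theorem_of_calculus_interior_strong[OF S(1) pq(2)])
    fix s assume s: "s \<in> {p<..<q} - S"
    then have s01: "s \<in> {0<..<1} - S" using pq by auto
    then have gs: "\<gamma> s \<noteq> 0" using nz by auto
    have "s \<in> {p..q}" using s by auto
    then have sb: "\<gamma> s \<in> ball 0 R" using img by blast
    note D = S(2)[OF s01]
    have dl: "(lt has_vector_derivative vd \<gamma> s / \<gamma> s) (at s)"
      by (rule lt_deriv[OF _ gs D vp ltc ltl]) (use s01 in auto)
    have "((\<lambda>\<sigma>. (\<mu> + 1) * lt \<sigma>) has_vector_derivative (\<mu> + 1) * (vd \<gamma> s / \<gamma> s)) (at s)"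
      by (rule has_vector_derivative_mult_right[OF dl])
    from field_vector_diff_chain_at[OF this DERIV_exp]
    have de: "((\<lambda>\<sigma>. exp ((\<mu> + 1) * lt \<sigma>)) has_vector_derivative (\<mu> + 1) * (vd \<gamma> s / \<gamma> s) * exp ((\<mu> + 1) * lt s)) (at s)"
      by (simp add: o_def)
    from field_vector_diff_chain_at[OF D Psi_deriv[OF hol mu sb]]
    have dP: "((\<lambda>\<sigma>. Psi \<mu> h (\<gamma> \<sigma>)) has_vector_derivative vd \<gamma> s * Psid \<mu> h (\<gamma> s)) (at s)"
      by (simp add: o_def)
    from has_vector_derivative_mult[OF de dP]
    have dprod: "((\<lambda>\<sigma>. exp ((\<mu> + 1) * lt \<sigma>) * Psi \<mu> h (\<gamma> \<sigma>)) has_vector_derivative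
        exp ((\<mu> + 1) * lt s) * (vd \<gamma> s * Psid \<mu> h (\<gamma> s)) + (\<mu> + 1) * (vd \<gamma> s / \<gamma> s) * exp ((\<mu> + 1) * lt s) * Psi \<mu> h (\<gamma> s)) (at s)" .
    have el: "exp ((\<mu> + 1) * lt s) = exp (\<mu> * lt s) * \<gamma> s"
      using ltl s01 gs by (simp add: distrib_right exp_add)
    have "exp ((\<mu> + 1) * lt s) * (vd \<gamma> s * Psid \<mu> h (\<gamma> s)) + (\<mu> + 1) * (vd \<gamma> s / \<gamma> s) * exp ((\<mu> + 1) * lt s) * Psi \<mu> h (\<gamma> s)
        = exp (\<mu> * lt s) * vd \<gamma> s * ((\<mu> + 1) * Psi \<mu> h (\<gamma> s) + \<gamma> s * Psid \<mu> h (\<gamma> s))"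
      unfolding el using gs by (simp add: field_simps)
    also have "\<dots> = pw (\<gamma> s) (lt s) \<mu> * h (\<gamma> s) * vd \<gamma> s"
      using Psi_ode[OF hol mu sb] gs by (simp add: pw_def)
    finally have dprod': "((\<lambda>\<sigma>. exp ((\<mu> + 1) * lt \<sigma>) * Psi \<mu> h (\<gamma> \<sigma>)) has_vector_derivative
        pw (\<gamma> s) (lt s) \<mu> * h (\<gamma> s) * vd \<gamma> s) (at s)" using dprod by simp
    show "(Qf \<mu> h \<gamma> lt has_vector_derivative pw (\<gamma> s) (lt s) \<mu> * h (\<gamma> s) * vd \<gamma> s) (at s)"
    proof (rule has_vector_derivative_transform_within_open[OF dprod' open_greaterThanLessThan])
      show "s \<in> {p<..<q}" using s by auto
    next
      fix y assume "y \<in> {p<..<q}"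
      then have "y \<in> {0<..<1}" using pq by auto
      then have "\<gamma> y \<noteq> 0" using nz by auto
      then show "exp ((\<mu> + 1) * lt y) * Psi \<mu> h (\<gamma> y) = Qf \<mu> h \<gamma> lt y"
        by (simp add: Qf_def pw_def)
    qed
  next
    have mu1: "Re (\<mu> + 1) > 0" using mu by simp
    have c1: "continuous_on {p..q} (\<lambda>s. pw (\<gamma> s) (lt s) (\<mu> + 1))"
      by (rule pw_cont_on[OF vp ltc ltl ltb mu1]) (use pq in auto)
    have "continuous_on {p..q} \<gamma>" using vp_cont[OF vp] by (rule continuous_on_subset) (use pq in auto)
    then have c2: "continuous_on {p..q} (\<lambda>s. Psi \<mu> h (\<gamma> s))"
      using continuous_on_compose2[OF Psi_cont_on[OF hol mu] _ img] by blast
    show "continuous_on {p..q} (Qf \<mu> h \<gamma> lt)"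
      unfolding Qf_def using continuous_on_mult[OF c1 c2] by simp
  qed
qed

lemma Psi_zderiv:
  fixes H H1 :: "complex \<Rightarrow> complex \<Rightarrow> complex"
  assumes Z: "open Z" "convex Z" "z0 \<in> Z" and t: "t \<in> ball 0 R" and mu: "Re \<mu> > 0"
    and Hc: "\<And>z. z \<in> Z \<Longrightarrow> continuous_on (ball 0 R) (H z)"
    and Hd: "\<And>z w. z \<in> Z \<Longrightarrow> w \<in> ball 0 R \<Longrightarrow> ((\<lambda>z. H z w) has_field_derivative H1 z w) (at z)"
    and H1c: "continuous_on (Z \<times> ball 0 R) (\<lambda>(z,w). H1 z w)"
  shows "((\<lambda>z. Psi \<mu> (H z) t) has_field_derivative Psi \<mu> (H1 z0) t) (at z0)"
proof -
  have "((\<lambda>z. integral (cbox 0 1) (\<lambda>\<rho>. rp \<mu> \<rho> * H z (of_real \<rho> * t))) has_field_derivative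
          integral (cbox 0 1) (\<lambda>\<rho>. rp \<mu> \<rho> * H1 z0 (of_real \<rho> * t))) (at z0 within Z)"
  proof (rule leibniz_rule_field_derivative[OF _ _ _ Z(3,2)])
    fix z and \<rho> :: real assume a: "z \<in> Z" "\<rho> \<in> cbox 0 1"
    have w: "of_real \<rho> * t \<in> ball 0 R" using ball_scale[OF t] a by auto
    from DERIV_cmult[OF Hd[OF a(1) w], of "rp \<mu> \<rho>"]
    show "((\<lambda>z. rp \<mu> \<rho> * H z (of_real \<rho> * t)) has_field_derivative rp \<mu> \<rho> * H1 z (of_real \<rho> * t)) (at z within Z)"
      by (rule has_field_derivative_at_within)
  next
    fix z assume z: "z \<in> Z"
    show "(\<lambda>\<rho>. rp \<mu> \<rho> * H z (of_real \<rho> * t)) integrable_on cbox 0 1"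
      using Psi_cont_int[OF Hc[OF z] mu t] by (simp add: integrable_continuous_real)
  next
    have c1: "continuous_on (Z \<times> cbox 0 1) (\<lambda>(z, \<rho>::real). H1 z (of_real \<rho> * t))"
    proof -
      have "continuous_on (Z \<times> cbox 0 1) (\<lambda>(z, \<rho>::real). (z, of_real \<rho> * t))"
        by (auto simp: split_beta intro!: continuous_intros)
      moreover have "(\<lambda>(z, \<rho>::real). (z, of_real \<rho> * t)) ` (Z \<times> cbox 0 1) \<subseteq> Z \<times> ball 0 R"
        using ball_scale[OF t] by auto
      ultimately show ?thesis
        using continuous_on_compose2[OF H1c, of "Z \<times> cbox 0 1" "\<lambda>(z, \<rho>::real). (z, of_real \<rho> * t)"]
        by (simp add: split_beta)
    qed
    have c2: "continuous_on (Z \<times> cbox 0 1) (\<lambda>(z::complex, \<rho>::real). rp \<mu> \<rho>)"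
    proof -
      have sub: "snd ` (Z \<times> cbox 0 (1::real)) \<subseteq> {0..}" by (auto simp: box_real)
      have cs: "continuous_on (Z \<times> cbox 0 (1::real)) snd" by (intro continuous_intros)
      have "continuous_on (Z \<times> cbox 0 1) (\<lambda>x::complex\<times>real. rp \<mu> (snd x))"
        by (rule rp_cont'[OF cs sub mu])
      then show ?thesis by (simp add: case_prod_beta)
    qed
    show "continuous_on (Z \<times> cbox 0 1) (\<lambda>(z, \<rho>). rp \<mu> \<rho> * H1 z (of_real \<rho> * t))"
      using continuous_on_mult[OF c2 c1] by (simp add: split_beta)
  qed
  then show ?thesis
    unfolding Psi_def using at_within_open[OF Z(3,1)] by simp
qed

lemma ratio_ok:
  fixes c t :: complex
  assumes "c \<noteq> 0" "t \<in> ball c R" "R \<le> cmod c"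
  shows "t / c \<notin> \<real>\<^sub>\<le>\<^sub>0"
proof
  assume a: "t / c \<in> \<real>\<^sub>\<le>\<^sub>0"
  have "cmod (t / c - 1) = cmod (t - c) / cmod c"
  proof -
    have "t / c - 1 = (t - c) / c" using assms(1) by (simp add: field_simps)
    then show ?thesis by (simp add: norm_divide)
  qed
  also have "\<dots> < 1" using assms by (simp add: dist_norm norm_minus_commute divide_less_eq)
  finally have "cmod (t / c - 1) < 1" .
  moreover have "Re (t / c) \<le> 0" using a by (auto simp: nonpos_Reals_def)
  moreover have "\<bar>Re (t / c - 1)\<bar> \<le> cmod (t / c - 1)" by (rule abs_Re_le_cmod)
  ultimately show False by simp
qed

lemma Bprop_from:
  fixes \<phi> :: "complex \<Rightarrow> real \<Rightarrow> complex" and \<phi>' :: "real \<Rightarrow> complex" and V :: "complex \<Rightarrow> complex"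
  assumes r: "r > 0"
    and I: "\<And>z. z \<in> ball z0 r \<Longrightarrow> (\<phi> z has_integral V z) {p..q}"
    and I': "(\<phi>' has_integral V') {p..q}"
    and d: "(V has_field_derivative V') (at z0)"
  shows "Bprop \<phi> \<phi>' z0 p q"
proof -
  have ev: "\<forall>\<^sub>F z in nhds z0. z \<in> ball z0 r" by (rule eventually_nhds_in_open) (use r in auto)
  have e1: "\<forall>\<^sub>F z in nhds z0. \<phi> z integrable_on {p..q}"
    using ev by (rule eventually_mono) (use I in blast)
  have e2: "\<forall>\<^sub>F z in nhds z0. integral {p..q} (\<phi> z) = V z"
    using ev by (rule eventually_mono) (use I integral_unique in blast)
  have "((\<lambda>z. integral {p..q} (\<phi> z)) has_field_derivative V') (at z0)"
    by (rule iffD2[OF DERIV_cong_ev[OF refl e2 refl] d])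
  then show ?thesis unfolding Bprop_def using e1 I' integral_unique by blast
qed

lemma LOC0:
  fixes \<gamma> lt :: "real \<Rightarrow> complex" and H H1 :: "complex \<Rightarrow> complex \<Rightarrow> complex"
    and \<phi> :: "complex \<Rightarrow> real \<Rightarrow> complex" and \<phi>' :: "real \<Rightarrow> complex"
  assumes vp: "valid_path \<gamma>" and nz: "\<forall>s\<in>{0<..<1}. \<gamma> s \<noteq> 0"
    and ltc: "continuous_on {s\<in>{0..1}. \<gamma> s \<noteq> 0} lt"
    and ltl: "\<forall>s\<in>{0..1}. \<gamma> s \<noteq> 0 \<longrightarrow> exp (lt s) = \<gamma> s"
    and ltb: "bounded (Im ` lt ` {s\<in>{0..1}. \<gamma> s \<noteq> 0})"
    and mu: "Re \<mu> > 0"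
    and pq: "0 \<le> p" "p \<le> q" "q \<le> 1" and img: "\<gamma> ` {p..q} \<subseteq> ball 0 R" and r: "r > 0"
    and Hhol: "\<And>z. z \<in> ball z0 r \<Longrightarrow> H z holomorphic_on ball 0 R"
    and Hd: "\<And>z w. z \<in> ball z0 r \<Longrightarrow> w \<in> ball 0 R \<Longrightarrow> ((\<lambda>z. H z w) has_field_derivative H1 z w) (at z)"
    and H1c: "continuous_on (ball z0 r \<times> ball 0 R) (\<lambda>(z,w). H1 z w)"
    and H1hol: "H1 z0 holomorphic_on ball 0 R"
    and phi: "\<And>z s. z \<in> ball z0 r \<Longrightarrow> s \<in> {p..q} \<Longrightarrow> \<phi> z s = pw (\<gamma> s) (lt s) \<mu> * H z (\<gamma> s) * vd \<gamma> s"
    and phi': "\<And>s. s \<in> {p..q} \<Longrightarrow> \<phi>' s = pw (\<gamma> s) (lt s) \<mu> * H1 z0 (\<gamma> s) * vd \<gamma> s"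
  shows "Bprop \<phi> \<phi>' z0 p q"
proof (rule Bprop_from[OF r])
  fix z assume z: "z \<in> ball z0 r"
  show "(\<phi> z has_integral (Qf \<mu> (H z) \<gamma> lt q - Qf \<mu> (H z) \<gamma> lt p)) {p..q}"
    by (rule has_integral_eq[OF _ prim_0[OF Hhol[OF z] mu vp pq img nz ltc ltl ltb]]) (simp add: phi[OF z])
next
  show "(\<phi>' has_integral (Qf \<mu> (H1 z0) \<gamma> lt q - Qf \<mu> (H1 z0) \<gamma> lt p)) {p..q}"
    by (rule has_integral_eq[OF _ prim_0[OF H1hol mu vp pq img nz ltc ltl ltb]]) (simp add: phi')
next
  have z0: "z0 \<in> ball z0 r" using r by simp
  have Hc: "\<And>z. z \<in> ball z0 r \<Longrightarrow> continuous_on (ball 0 R) (H z)"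
    using Hhol holomorphic_on_imp_continuous_on by blast
  have "q \<in> {p..q}" "p \<in> {p..q}" using pq by auto
  then have gq: "\<gamma> q \<in> ball 0 R" "\<gamma> p \<in> ball 0 R" using img by blast+
  note P = Psi_zderiv[OF open_ball convex_ball z0 _ mu Hc Hd H1c]
  have "((\<lambda>z. pw (\<gamma> q) (lt q) (\<mu> + 1) * Psi \<mu> (H z) (\<gamma> q) - pw (\<gamma> p) (lt p) (\<mu> + 1) * Psi \<mu> (H z) (\<gamma> p))
     has_field_derivative pw (\<gamma> q) (lt q) (\<mu> + 1) * Psi \<mu> (H1 z0) (\<gamma> q) - pw (\<gamma> p) (lt p) (\<mu> + 1) * Psi \<mu> (H1 z0) (\<gamma> p)) (at z0)"
    by (intro DERIV_diff DERIV_cmult P gq)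
  then show "((\<lambda>z. Qf \<mu> (H z) \<gamma> lt q - Qf \<mu> (H z) \<gamma> lt p) has_field_derivative
      Qf \<mu> (H1 z0) \<gamma> lt q - Qf \<mu> (H1 z0) \<gamma> lt p) (at z0)"
    unfolding Qf_def .
qed

lemma LOCn:
  fixes \<gamma> lt :: "real \<Rightarrow> complex" and H H1 :: "complex \<Rightarrow> complex \<Rightarrow> complex"
    and \<phi> :: "complex \<Rightarrow> real \<Rightarrow> complex" and \<phi>' :: "real \<Rightarrow> complex"
  assumes vp: "valid_path \<gamma>" and c: "c \<noteq> 0" "R \<le> cmod c"
    and pq: "0 \<le> p" "p \<le> q" "q \<le> 1" and img: "\<gamma> ` {p..q} \<subseteq> ball c R" and r: "r > 0"
    and lloc: "\<And>s. s \<in> {p..q} \<Longrightarrow> \<gamma> s \<noteq> 0 \<and> lt s = l1 + Ln (\<gamma> s / c)"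
    and Hhol: "\<And>z. z \<in> ball z0 r \<Longrightarrow> H z holomorphic_on ball c R"
    and Hd: "\<And>z w. z \<in> ball z0 r \<Longrightarrow> w \<in> ball c R \<Longrightarrow> ((\<lambda>z. H z w) has_field_derivative H1 z w) (at z)"
    and H1c: "continuous_on (ball z0 r \<times> ball c R) (\<lambda>(z,w). H1 z w)"
    and H1hol: "H1 z0 holomorphic_on ball c R"
    and phi: "\<And>z s. z \<in> ball z0 r \<Longrightarrow> s \<in> {p..q} \<Longrightarrow> \<phi> z s = pw (\<gamma> s) (lt s) \<mu> * H z (\<gamma> s) * vd \<gamma> s"
    and phi': "\<And>s. s \<in> {p..q} \<Longrightarrow> \<phi>' s = pw (\<gamma> s) (lt s) \<mu> * H1 z0 (\<gamma> s) * vd \<gamma> s"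
  shows "Bprop \<phi> \<phi>' z0 p q"
proof -
  define E where "E t = exp (\<mu> * (l1 + Ln (t / c)))" for t
  have rok: "\<And>t. t \<in> ball c R \<Longrightarrow> t / c \<notin> \<real>\<^sub>\<le>\<^sub>0" using ratio_ok[OF c(1) _ c(2)] by blast
  have Ehol: "E holomorphic_on ball c R"
    unfolding E_def by (intro holomorphic_intros holomorphic_on_Ln' rok) (use c in auto)
  have Ec: "continuous_on (ball c R) E" using Ehol by (rule holomorphic_on_imp_continuous_on)
  have pwE: "pw (\<gamma> s) (lt s) \<mu> = E (\<gamma> s)" if "s \<in> {p..q}" for s
    using lloc[OF that] by (simp add: pw_def E_def)
  show ?thesis
  proof (rule Bprop_from[OF r])
    fix z assume z: "z \<in> ball z0 r"
    have "(\<lambda>t. E t * H z t) holomorphic_on ball c R" using Ehol Hhol[OF z] by (intro holomorphic_intros)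
    from prim_int[OF this vp pq img]
    show "(\<phi> z has_integral (LP (\<lambda>t. E t * H z t) c (\<gamma> q) - LP (\<lambda>t. E t * H z t) c (\<gamma> p))) {p..q}"
      by (rule has_integral_eq[rotated]) (simp add: phi[OF z] pwE)
  next
    have "(\<lambda>t. E t * H1 z0 t) holomorphic_on ball c R" using Ehol H1hol by (intro holomorphic_intros)
    from prim_int[OF this vp pq img]
    show "(\<phi>' has_integral (LP (\<lambda>t. E t * H1 z0 t) c (\<gamma> q) - LP (\<lambda>t. E t * H1 z0 t) c (\<gamma> p))) {p..q}"
      by (rule has_integral_eq[rotated]) (simp add: phi' pwE)
  next
    have z0: "z0 \<in> ball z0 r" using r by simp
    have "q \<in> {p..q}" "p \<in> {p..q}" using pq by auto
  then have gq: "\<gamma> q \<in> ball c R" "\<gamma> p \<in> ball c R" using img by blast+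
    have dF: "((\<lambda>z. E w * H z w) has_field_derivative E w * H1 z w) (at z)"
      if "z \<in> ball z0 r" "w \<in> ball c R" for z w
      by (rule DERIV_cmult[OF Hd[OF that]])
    have cF1: "continuous_on (ball z0 r \<times> ball c R) (\<lambda>(z, w). E w * H1 z w)"
    proof -
      have "continuous_on (ball z0 r \<times> ball c R) (\<lambda>x. E (snd x))"
        by (rule continuous_on_compose2[OF Ec]) (auto intro!: continuous_intros)
      then show ?thesis using continuous_on_mult[OF _ H1c] by (simp add: split_beta)
    qed
    have cF: "continuous_on (ball c R) (\<lambda>t. E t * H z t)" if "z \<in> ball z0 r" for z
      using Hhol[OF that] Ehol by (intro holomorphic_on_imp_continuous_on holomorphic_intros)
    note P = LP_deriv[OF open_ball convex_ball z0 _ dF cF1 cF]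
    show "((\<lambda>z. LP (\<lambda>t. E t * H z t) c (\<gamma> q) - LP (\<lambda>t. E t * H z t) c (\<gamma> p)) has_field_derivative
        LP (\<lambda>t. E t * H1 z0 t) c (\<gamma> q) - LP (\<lambda>t. E t * H1 z0 t) c (\<gamma> p)) (at z0)"
      by (intro DERIV_diff P gq)
  qed
qed

lemma LOC:
  fixes \<gamma> lt :: "real \<Rightarrow> complex" and H H1 :: "complex \<Rightarrow> complex \<Rightarrow> complex"
    and \<phi> :: "complex \<Rightarrow> real \<Rightarrow> complex" and \<phi>' :: "real \<Rightarrow> complex"
  assumes vp: "valid_path \<gamma>" and nz: "\<forall>s\<in>{0<..<1}. \<gamma> s \<noteq> 0"
    and ltc: "continuous_on {s\<in>{0..1}. \<gamma> s \<noteq> 0} lt"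
    and ltl: "\<forall>s\<in>{0..1}. \<gamma> s \<noteq> 0 \<longrightarrow> exp (lt s) = \<gamma> s"
    and ltb: "bounded (Im ` lt ` {s\<in>{0..1}. \<gamma> s \<noteq> 0})"
    and mu: "Re \<mu> > 0" and s1: "s1 \<in> {0..1}"
    and R: "R > 0" and r: "r > 0" and e0: "e0 > 0"
    and Hhol: "\<And>z. z \<in> ball z0 r \<Longrightarrow> H z holomorphic_on ball (\<gamma> s1) R"
    and Hd: "\<And>z w. z \<in> ball z0 r \<Longrightarrow> w \<in> ball (\<gamma> s1) R \<Longrightarrow> ((\<lambda>z. H z w) has_field_derivative H1 z w) (at z)"
    and H1c: "continuous_on (ball z0 r \<times> ball (\<gamma> s1) R) (\<lambda>(z,w). H1 z w)"
    and H1hol: "H1 z0 holomorphic_on ball (\<gamma> s1) R"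
    and phi: "\<And>z s. z \<in> ball z0 r \<Longrightarrow> s \<in> {0..1} \<Longrightarrow> \<bar>s - s1\<bar> < e0 \<Longrightarrow> \<phi> z s = pw (\<gamma> s) (lt s) \<mu> * H z (\<gamma> s) * vd \<gamma> s"
    and phi': "\<And>s. s \<in> {0..1} \<Longrightarrow> \<bar>s - s1\<bar> < e0 \<Longrightarrow> \<phi>' s = pw (\<gamma> s) (lt s) \<mu> * H1 z0 (\<gamma> s) * vd \<gamma> s"
  shows "\<exists>\<epsilon>>0. \<forall>p q. p \<in> {0..1} \<longrightarrow> q \<in> {0..1} \<longrightarrow> p \<le> q
      \<longrightarrow> \<bar>p - s1\<bar> < \<epsilon> \<longrightarrow> \<bar>q - s1\<bar> < \<epsilon> \<longrightarrow> Bprop \<phi> \<phi>' z0 p q"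
proof -
  have gc: "continuous_on {0..1} \<gamma>" using vp_cont[OF vp] .
  have btw: "\<bar>s - s1\<bar> < e" if "s \<in> {p..q}" "\<bar>p - s1\<bar> < e" "\<bar>q - s1\<bar> < e" for s p q e :: real
    using that by auto
  show ?thesis
  proof (cases "\<gamma> s1 = 0")
    case True
    obtain d where d: "d > 0" "\<And>x. x \<in> {0..1} \<Longrightarrow> dist x s1 < d \<Longrightarrow> dist (\<gamma> x) (\<gamma> s1) < R"
      using gc[unfolded continuous_on_iff, rule_format, OF s1 R] by blast
    show ?thesis
    proof (intro exI[of _ "min e0 d"] conjI allI impI)
      show "0 < min e0 d" using e0 d by simp
    next
      fix p q assume pq: "p \<in> {0..1}" "q \<in> {0..1}" "p \<le> q" "\<bar>p - s1\<bar> < min e0 d" "\<bar>q - s1\<bar> < min e0 d"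
      have sub: "s \<in> {0..1}" "\<bar>s - s1\<bar> < e0" "\<bar>s - s1\<bar> < d" if "s \<in> {p..q}" for s
        using that pq btw[OF that pq(4,5)] by auto
      have img: "\<gamma> ` {p..q} \<subseteq> ball 0 R"
      proof
        fix y assume "y \<in> \<gamma> ` {p..q}"
        then obtain s where s: "s \<in> {p..q}" "y = \<gamma> s" by blast
        show "y \<in> ball 0 R" using d(2)[OF sub(1)[OF s(1)]] sub(3)[OF s(1)] True s(2)
          by (simp add: dist_real_def dist_norm)
      qed
      show "Bprop \<phi> \<phi>' z0 p q"
        by (rule LOC0[OF vp nz ltc ltl ltb mu _ pq(3) _ img r, where H=H and ?H1.0=H1 and \<phi>=\<phi> and \<phi>'=\<phi>'])
           (use pq Hhol Hd H1c H1hol True phi phi' sub in auto)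
    qed
  next
    case False
    define R' where "R' = min R (cmod (\<gamma> s1))"
    have R': "R' > 0" "R' \<le> cmod (\<gamma> s1)" "R' \<le> R" using R False by (auto simp: R'_def)
    obtain d where d: "d > 0" "\<And>x. x \<in> {0..1} \<Longrightarrow> dist x s1 < d \<Longrightarrow> dist (\<gamma> x) (\<gamma> s1) < R'"
      using gc[unfolded continuous_on_iff, rule_format, OF s1 R'(1)] by blast
    obtain d' where d': "d' > 0" "\<And>x. x \<in> {0..1} \<Longrightarrow> \<bar>x - s1\<bar> < d' \<Longrightarrow> \<gamma> x \<noteq> 0 \<and> lt x = lt s1 + Ln (\<gamma> x / \<gamma> s1)"
      using lt_local[OF s1 False vp ltc ltl] by blast
    have bsub: "ball (\<gamma> s1) R' \<subseteq> ball (\<gamma> s1) R" using R' by auto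
    show ?thesis
    proof (intro exI[of _ "min e0 (min d d')"] conjI allI impI)
      show "0 < min e0 (min d d')" using e0 d d' by simp
    next
      fix p q assume pq: "p \<in> {0..1}" "q \<in> {0..1}" "p \<le> q" "\<bar>p - s1\<bar> < min e0 (min d d')" "\<bar>q - s1\<bar> < min e0 (min d d')"
      have sub: "s \<in> {0..1}" "\<bar>s - s1\<bar> < e0" "\<bar>s - s1\<bar> < d" "\<bar>s - s1\<bar> < d'" if "s \<in> {p..q}" for s
        using that pq btw[OF that pq(4,5)] by auto
      have img: "\<gamma> ` {p..q} \<subseteq> ball (\<gamma> s1) R'"
      proof
        fix y assume "y \<in> \<gamma> ` {p..q}"
        then obtain s where s: "s \<in> {p..q}" "y = \<gamma> s" by blast
        show "y \<in> ball (\<gamma> s1) R'" using d(2)[OF sub(1)[OF s(1)]] sub(3)[OF s(1)] s(2)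
          by (simp add: dist_real_def dist_commute)
      qed
      have H1c': "continuous_on (ball z0 r \<times> ball (\<gamma> s1) R') (\<lambda>(z,w). H1 z w)"
        by (rule continuous_on_subset[OF H1c]) (use bsub in auto)
      show "Bprop \<phi> \<phi>' z0 p q"
      proof (rule LOCn[OF vp False R'(2) _ pq(3) _ img r, where ?l1.0="lt s1" and lt=lt and H=H and ?H1.0=H1 and \<phi>=\<phi> and \<mu>=\<mu> and \<phi>'=\<phi>'])
        show "0 \<le> p" "q \<le> 1" using pq by auto
        show "\<And>s. s \<in> {p..q} \<Longrightarrow> \<gamma> s \<noteq> 0 \<and> lt s = lt s1 + Ln (\<gamma> s / \<gamma> s1)"
          using d'(2) sub by blast
        show "\<And>z. z \<in> ball z0 r \<Longrightarrow> H z holomorphic_on ball (\<gamma> s1) R'"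
          using Hhol holomorphic_on_subset[OF _ bsub] by blast
        show "\<And>z w. z \<in> ball z0 r \<Longrightarrow> w \<in> ball (\<gamma> s1) R' \<Longrightarrow> ((\<lambda>z. H z w) has_field_derivative H1 z w) (at z)"
          using Hd bsub by blast
        show "continuous_on (ball z0 r \<times> ball (\<gamma> s1) R') (\<lambda>(z,w). H1 z w)" by (rule H1c')
        show "H1 z0 holomorphic_on ball (\<gamma> s1) R'" using H1hol holomorphic_on_subset[OF _ bsub] by blast
        show "\<And>z s. z \<in> ball z0 r \<Longrightarrow> s \<in> {p..q} \<Longrightarrow> \<phi> z s = pw (\<gamma> s) (lt s) \<mu> * H z (\<gamma> s) * vd \<gamma> s"
          using phi sub by blast
        show "\<And>s. s \<in> {p..q} \<Longrightarrow> \<phi>' s = pw (\<gamma> s) (lt s) \<mu> * H1 z0 (\<gamma> s) * vd \<gamma> s"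
          using phi' sub by blast
      qed
    qed
  qed
qed

lemma upd1_cont: "continuous_on UNIV (\<lambda>z. upd1 x i z)"
proof -
  have "continuous_on UNIV (\<lambda>z. if j = i then z else fst x $ j)" for j :: 'a
    by (cases "j = i") (auto intro!: continuous_intros)
  then show ?thesis unfolding upd1_def
    by (intro continuous_on_Pair continuous_on_vec_lambda continuous_on_const)
qed

lemma upd2_cont: "continuous_on UNIV (\<lambda>z. upd2 x i z)"
proof -
  have "continuous_on UNIV (\<lambda>z. if j = i then z else snd x $ j)" for j :: 'a
    by (cases "j = i") (auto intro!: continuous_intros)
  then show ?thesis unfolding upd2_def
    by (intro continuous_on_Pair continuous_on_vec_lambda continuous_on_const)
qed

lemma upd1_self: "upd1 x i (fst x $ i) = x"
  by (simp add: upd1_def vec_eq_iff prod_eq_iff)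

lemma upd2_self: "upd2 x i (snd x $ i) = x"
  by (simp add: upd2_def vec_eq_iff prod_eq_iff)

lemma lin_upd1: "lin (upd1 x i z) k t = (if k = i then z + snd x $ k * t else lin x k t)"
  by (simp add: lin_def upd1_def)

lemma lin_upd2: "lin (upd2 x i z) k t = (if k = i then fst x $ k + z * t else lin x k t)"
  by (simp add: lin_def upd2_def)

lemma lin_nz:
  fixes \<gamma> :: "real \<Rightarrow> complex" and U :: "((complex^'n) \<times> (complex^'n)) set"
  assumes vp: "valid_path \<gamma>" and U: "open U"
    and avoid_L: "\<forall>y\<in>U. \<forall>s\<in>{0<..<1}. \<forall>i. lin y i (\<gamma> s) \<noteq> 0"
    and y: "y \<in> U" and s0: "s0 \<in> {0..1}"
  shows "lin y k (\<gamma> s0) \<noteq> 0"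
proof
  assume z: "lin y k (\<gamma> s0) = 0"
  define m where "m u = upd1 y k u" for u
  have "open (m -` U)" unfolding m_def by (rule open_vimage[OF U upd1_cont])
  moreover have "fst y $ k \<in> m -` U" using y by (simp add: m_def upd1_self)
  ultimately obtain e where e: "e > 0" "ball (fst y $ k) e \<subseteq> m -` U"
    using open_contains_ball by blast
  define g where "g s = lin y k (\<gamma> s)" for s
  have gc: "continuous_on {0..1} g" unfolding g_def lin_def
    using vp_cont[OF vp] by (intro continuous_intros)
  obtain d where d: "d > 0" "\<And>s. s \<in> {0..1} \<Longrightarrow> dist s s0 < d \<Longrightarrow> dist (g s) (g s0) < e"
    using gc[unfolded continuous_on_iff, rule_format, OF s0 e(1)] by blast
  have s0': "s0 = 0 \<or> s0 = 1"
  proof (rule ccontr)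
    assume "\<not> (s0 = 0 \<or> s0 = 1)"
    then have "s0 \<in> {0<..<1}" using s0 by auto
    then show False using avoid_L y z by blast
  qed
  define h where "h = min (d/2) (1/2)"
  have h: "h > 0" "h < d" "h \<le> 1/2" using d by (auto simp: h_def)
  define s' where "s' = (if s0 = 0 then h else 1 - h)"
  have s'1: "s' \<in> {0<..<1}" using h by (auto simp: s'_def)
  have s'2: "dist s' s0 < d" using h s0' by (auto simp: s'_def dist_real_def)
  have "dist (g s') (g s0) < e" using d(2)[OF _ s'2] s'1 by auto
  then have gs: "cmod (g s') < e" using z by (simp add: g_def dist_norm)
  define u where "u = fst y $ k - g s'"
  have "u \<in> ball (fst y $ k) e" using gs by (simp add: u_def dist_norm)
  then have "m u \<in> U" using e(2) by blast
  moreover have "lin (m u) k (\<gamma> s') = 0"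
    unfolding m_def lin_upd1 by (simp add: u_def g_def lin_def)
  ultimately show False using avoid_L s'1 by blast
qed

lemma dist_pair_le: "dist (a, b) (c, d) \<le> dist a c + dist b d"
  unfolding dist_Pair_Pair by (rule sqrt_sum_squares_le_sum) auto

lemma lL_match:
  fixes \<gamma> :: "real \<Rightarrow> complex" and U :: "((complex^'n) \<times> (complex^'n)) set"
    and ups :: "complex \<Rightarrow> (complex^'n) \<times> (complex^'n)"
    and lL :: "'n \<Rightarrow> (complex^'n) \<times> (complex^'n) \<Rightarrow> real \<Rightarrow> complex"
  assumes vp: "valid_path \<gamma>" and U: "open U" and upsc: "continuous_on UNIV ups"
    and ups0: "ups z0 = x" and x: "x \<in> U"
    and lnz: "\<forall>y\<in>U. \<forall>s\<in>{0..1}. \<forall>k. lin y k (\<gamma> s) \<noteq> 0"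
    and lL_cont: "\<forall>i. continuous_on {(y, s). y \<in> U \<and> s \<in> {0..1} \<and> lin y i (\<gamma> s) \<noteq> 0}
                        (\<lambda>(y, s). lL i y s)"
    and lL_log: "\<forall>i. \<forall>y\<in>U. \<forall>s\<in>{0..1}. lin y i (\<gamma> s) \<noteq> 0 \<longrightarrow> exp (lL i y s) = lin y i (\<gamma> s)"
    and s1: "s1 \<in> {0..1}"
  shows "\<exists>d>0. \<forall>z s. dist z z0 < d \<longrightarrow> s \<in> {0..1} \<longrightarrow> \<bar>s - s1\<bar> < d \<longrightarrow>
            ups z \<in> U \<and> lL k (ups z) s = lL k x s1 + Ln (lin (ups z) k (\<gamma> s) / lin x k (\<gamma> s1))"
proof -
  define Zo where "Zo = ups -` U"
  have Zo: "open Zo" unfolding Zo_def by (rule open_vimage[OF U upsc])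
  have z0: "z0 \<in> Zo" using x ups0 by (simp add: Zo_def)
  define A where "A = Zo \<times> {0..1::real}"
  define p0 where "p0 = (z0, s1)"
  have p0: "p0 \<in> A" using z0 s1 by (simp add: A_def p0_def)
  have gc: "continuous_on {0..1} \<gamma>" using vp_cont[OF vp] .
  have mc: "continuous_on A (\<lambda>p. (ups (fst p), snd p))"
    by (intro continuous_intros continuous_on_compose2[OF upsc]) auto
  have msub: "(\<lambda>p. (ups (fst p), snd p)) ` A \<subseteq> {(y, s). y \<in> U \<and> s \<in> {0..1} \<and> lin y k (\<gamma> s) \<noteq> 0}"
    using lnz by (auto simp: A_def Zo_def)
  have cl: "continuous_on A (\<lambda>p. lL k (ups (fst p)) (snd p))"
    using continuous_on_compose2[OF lL_cont[rule_format, of k] mc msub] by (simp add: split_beta)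
  have gA: "continuous_on A (\<lambda>p. \<gamma> (snd p))"
    by (rule continuous_on_compose2[OF gc]) (auto simp: A_def intro!: continuous_intros)
  have uA: "continuous_on A (\<lambda>p. ups (fst p))"
    by (rule continuous_on_compose2[OF upsc]) (auto intro!: continuous_intros)
  have cw: "continuous_on A (\<lambda>p. lin (ups (fst p)) k (\<gamma> (snd p)))"
    unfolding lin_def using gA uA by (intro continuous_intros)
  have l: "((\<lambda>p. lL k (ups (fst p)) (snd p)) \<longlongrightarrow> lL k x s1) (at p0 within A)"
    using cl p0 ups0 unfolding continuous_on_def p0_def by force
  have w: "((\<lambda>p. lin (ups (fst p)) k (\<gamma> (snd p))) \<longlongrightarrow> lin x k (\<gamma> s1)) (at p0 within A)"
    using cw p0 ups0 unfolding continuous_on_def p0_def by force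
  have L0: "lin x k (\<gamma> s1) \<noteq> 0" using lnz x s1 by blast
  have ex: "\<forall>\<^sub>F p in at p0 within A. exp (lL k (ups (fst p)) (snd p)) = lin (ups (fst p)) k (\<gamma> (snd p))"
    unfolding eventually_at_filter
    by (rule always_eventually) (use lL_log lnz in \<open>auto simp: A_def Zo_def\<close>)
  have "\<forall>\<^sub>F p in at p0 within A. lL k (ups (fst p)) (snd p) = lL k x s1 + Ln (lin (ups (fst p)) k (\<gamma> (snd p)) / lin x k (\<gamma> s1))"
    by (rule branch_ev[OF l w L0 ex]) (use lL_log x s1 L0 in auto)
  then obtain d1 where d1: "d1 > 0" "\<And>p. p \<in> A \<Longrightarrow> p \<noteq> p0 \<Longrightarrow> dist p p0 < d1 \<Longrightarrow>
      lL k (ups (fst p)) (snd p) = lL k x s1 + Ln (lin (ups (fst p)) k (\<gamma> (snd p)) / lin x k (\<gamma> s1))"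
    unfolding eventually_at by blast
  obtain d2 where d2: "d2 > 0" "ball z0 d2 \<subseteq> Zo" using Zo z0 open_contains_ball by blast
  show ?thesis
  proof (intro exI[of _ "min (d1/2) d2"] conjI allI impI)
    show "0 < min (d1/2) d2" using d1 d2 by simp
  next
    fix z s assume a: "dist z z0 < min (d1/2) d2" "s \<in> {0..1}" "\<bar>s - s1\<bar> < min (d1/2) d2"
    have zZ: "z \<in> Zo" using a(1) d2(2) by (auto simp: dist_commute)
    then show "ups z \<in> U" by (simp add: Zo_def)
    show "lL k (ups z) s = lL k x s1 + Ln (lin (ups z) k (\<gamma> s) / lin x k (\<gamma> s1))"
    proof (cases "(z, s) = p0")
      case True
      then have "z = z0" "s = s1" by (auto simp: p0_def)
      then show ?thesis using L0 ups0 by simp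
    next
      case False
      have "dist (z, s) p0 \<le> dist z z0 + dist s s1" unfolding p0_def by (rule dist_pair_le)
      also have "\<dots> < d1" using a by (simp add: dist_real_def)
      finally have "dist (z, s) p0 < d1" .
      moreover have "(z, s) \<in> A" using zZ a(2) by (simp add: A_def)
      ultimately show ?thesis using d1(2)[of "(z, s)"] False by simp
    qed
  qed
qed

lemma fin_delta:
  fixes P :: "'k::finite \<Rightarrow> 'a::metric_space \<Rightarrow> 'b::metric_space \<Rightarrow> bool"
  assumes "\<And>k. \<exists>d>0. \<forall>u v. dist u u0 < d \<longrightarrow> dist v v0 < d \<longrightarrow> P k u v"
  shows "\<exists>d>0. \<forall>u v. dist u u0 < d \<longrightarrow> dist v v0 < d \<longrightarrow> (\<forall>k. P k u v)"
proof -
  obtain dk where dk: "\<And>k. dk k > 0 \<and> (\<forall>u v. dist u u0 < dk k \<longrightarrow> dist v v0 < dk k \<longrightarrow> P k u v)"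
    using assms by metis
  define d where "d = Min (range dk)"
  have fin: "finite (range dk)" by simp
  have ne: "range dk \<noteq> {}" by simp
  have "d > 0" unfolding d_def using Min_gr_iff[OF fin ne] dk by auto
  moreover have "d \<le> dk k" for k unfolding d_def by (rule Min_le[OF fin]) simp
  ultimately show ?thesis using dk by (meson less_le_trans)
qed

lemma ratio_ok2:
  fixes L L0 :: complex
  assumes "L0 \<noteq> 0" "cmod (L - L0) < cmod L0"
  shows "L / L0 \<notin> \<real>\<^sub>\<le>\<^sub>0" "L \<noteq> 0"
proof -
  have "L \<in> ball L0 (cmod L0)" using assms(2) by (simp add: dist_norm norm_minus_commute)
  then show "L / L0 \<notin> \<real>\<^sub>\<le>\<^sub>0" using ratio_ok[OF assms(1)] by blast
  show "L \<noteq> 0" using assms(2) by auto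
qed

lemma good_nbhd:
  fixes ups :: "complex \<Rightarrow> (complex^'n) \<times> (complex^'n)"
  assumes upsc: "continuous_on UNIV ups" and ups0: "ups z0 = x"
    and L0: "\<And>k. lin x k c \<noteq> 0"
  shows "\<exists>\<rho>>0. \<forall>z t. dist z z0 < \<rho> \<longrightarrow> dist t c < \<rho> \<longrightarrow> (\<forall>k. cmod (lin (ups z) k t - lin x k c) < cmod (lin x k c))"
proof (rule fin_delta)
  fix k :: 'n
  have "continuous_on UNIV (\<lambda>p::complex\<times>complex. lin (ups (fst p)) k (snd p))"
    unfolding lin_def by (intro continuous_intros continuous_on_compose2[OF upsc]) auto
  then have "isCont (\<lambda>p::complex\<times>complex. lin (ups (fst p)) k (snd p)) (z0, c)"
    by (simp add: continuous_on_eq_continuous_at)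
  then obtain d where d: "d > 0" "\<And>p. dist p (z0, c) < d \<Longrightarrow> dist (lin (ups (fst p)) k (snd p)) (lin x k c) < cmod (lin x k c)"
  proof -
    have e: "cmod (lin x k c) > 0" using L0[of k] by simp
    from \<open>isCont _ _\<close>[unfolded continuous_at_eps_delta, rule_format, OF e]
    show ?thesis using that ups0 by auto
  qed
  show "\<exists>d>0. \<forall>z t. dist z z0 < d \<longrightarrow> dist t c < d \<longrightarrow> cmod (lin (ups z) k t - lin x k c) < cmod (lin x k c)"
  proof (intro exI[of _ "d/2"] conjI allI impI)
    show "0 < d/2" using d by simp
    fix z t assume a: "dist z z0 < d/2" "dist t c < d/2"
    have "dist (z, t) (z0, c) \<le> dist z z0 + dist t c" by (rule dist_pair_le)
    also have "\<dots> < d" using a by simp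
    finally show "cmod (lin (ups z) k t - lin x k c) < cmod (lin x k c)"
      using d(2)[of "(z, t)"] by (simp add: dist_norm)
  qed
qed

lemma prod_pw_exp:
  fixes L l a :: "'n::finite \<Rightarrow> complex"
  assumes "\<And>k. L k \<noteq> 0"
  shows "(\<Prod>k\<in>UNIV. pw (L k) (l k) (a k)) = exp (\<Sum>k\<in>UNIV. a k * l k)"
  using assms by (simp add: pw_def exp_sum)

lemma sum_axis:
  fixes \<alpha> :: "complex^'n::finite" and l :: "'n \<Rightarrow> complex"
  shows "(\<Sum>k\<in>UNIV. (\<alpha> - axis i 1) $ k * l k) = (\<Sum>k\<in>UNIV. \<alpha> $ k * l k) - l i"
proof -
  have "(\<Sum>k\<in>UNIV. (\<alpha> - axis i 1) $ k * l k) = (\<Sum>k\<in>UNIV. \<alpha> $ k * l k - (if k = i then l k else 0))"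
    by (rule sum.cong) (auto simp: axis_def algebra_simps)
  also have "\<dots> = (\<Sum>k\<in>UNIV. \<alpha> $ k * l k) - l i"
    by (simp add: sum_subtractf)
  finally show ?thesis .
qed

lemma core:
  fixes \<gamma> lt :: "real \<Rightarrow> complex" and lL :: "'n::finite \<Rightarrow> (complex^'n) \<times> (complex^'n) \<Rightarrow> real \<Rightarrow> complex"
    and U :: "((complex^'n) \<times> (complex^'n)) set" and \<alpha> :: "complex^'n" and \<delta> :: complex
    and x :: "(complex^'n) \<times> (complex^'n)" and i :: 'n and ups :: "complex \<Rightarrow> (complex^'n) \<times> (complex^'n)"
    and z0 a1 b1 a2 b2 :: complex
  assumes vp: "valid_path \<gamma>" and U: "open U" "x \<in> U"
    and avoid_t: "\<forall>s\<in>{0<..<1}. \<gamma> s \<noteq> 0"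
    and avoid_L: "\<forall>y\<in>U. \<forall>s\<in>{0<..<1}. \<forall>i. lin y i (\<gamma> s) \<noteq> 0"
    and ltc: "continuous_on {s\<in>{0..1}. \<gamma> s \<noteq> 0} lt"
    and ltl: "\<forall>s\<in>{0..1}. \<gamma> s \<noteq> 0 \<longrightarrow> exp (lt s) = \<gamma> s"
    and ltb: "bounded (Im ` lt ` {s\<in>{0..1}. \<gamma> s \<noteq> 0})"
    and lL_cont: "\<forall>i. continuous_on {(y, s). y \<in> U \<and> s \<in> {0..1} \<and> lin y i (\<gamma> s) \<noteq> 0}
                        (\<lambda>(y, s). lL i y s)"
    and lL_log: "\<forall>i. \<forall>y\<in>U. \<forall>s\<in>{0..1}. lin y i (\<gamma> s) \<noteq> 0 \<longrightarrow> exp (lL i y s) = lin y i (\<gamma> s)"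
    and mu: "Re (- \<delta> - 1) > 0"
    and upsc: "continuous_on UNIV ups" and ups0: "ups z0 = x"
    and upsk: "\<And>z k t. k \<noteq> i \<Longrightarrow> lin (ups z) k t = lin x k t"
    and upsi: "\<And>z t. lin (ups z) i t = (a1 + z * b1) + (a2 + z * b2) * t"
  shows "((\<lambda>z. Phi \<gamma> lt lL \<alpha> \<delta> (ups z)) has_field_derivative
          integral {0..1} (\<lambda>s. \<alpha> $ i * ((b1 + b2 * \<gamma> s) * integrand \<gamma> lt lL (\<alpha> - axis i 1) \<delta> x s) * vd \<gamma> s)) (at z0)
     \<and> (\<lambda>s. integrand \<gamma> lt lL \<alpha> \<delta> x s * vd \<gamma> s) integrable_on {0..1}"
proof -
  have lnz: "\<forall>y\<in>U. \<forall>s\<in>{0..1}. \<forall>k. lin y k (\<gamma> s) \<noteq> 0" using lin_nz[OF vp U(1) avoid_L] by blast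
  define \<phi> where "\<phi> z s = integrand \<gamma> lt lL \<alpha> \<delta> (ups z) s * vd \<gamma> s" for z s
  define \<phi>' where "\<phi>' s = \<alpha> $ i * ((b1 + b2 * \<gamma> s) * integrand \<gamma> lt lL (\<alpha> - axis i 1) \<delta> x s) * vd \<gamma> s" for s
  have "Bprop \<phi> \<phi>' z0 0 1"
  proof (rule Bprop_chain)
    fix s1 :: real assume s1: "s1 \<in> {0..1}"
    define L0 where "L0 k = lin x k (\<gamma> s1)" for k
    have L0: "L0 k \<noteq> 0" for k using lnz U(2) s1 by (simp add: L0_def)
    obtain \<rho> where \<rho>: "\<rho> > 0" "\<And>z t k. dist z z0 < \<rho> \<Longrightarrow> dist t (\<gamma> s1) < \<rho> \<Longrightarrow> cmod (lin (ups z) k t - L0 k) < cmod (L0 k)"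
      using good_nbhd[OF upsc ups0, of "\<gamma> s1"] L0 unfolding L0_def by blast
    obtain dm where dm: "dm > 0" "\<And>z s k. dist z z0 < dm \<Longrightarrow> dist s s1 < dm \<Longrightarrow> s \<in> {0..1} \<Longrightarrow>
        ups z \<in> U \<and> lL k (ups z) s = lL k x s1 + Ln (lin (ups z) k (\<gamma> s) / L0 k)"
    proof -
      have "\<exists>d>0. \<forall>z s. dist z z0 < d \<longrightarrow> dist s s1 < d \<longrightarrow> (\<forall>k. s \<in> {0..1} \<longrightarrow> ups z \<in> U \<and> lL k (ups z) s = lL k x s1 + Ln (lin (ups z) k (\<gamma> s) / L0 k))"
      proof (rule fin_delta)
        fix k
        obtain d where "d>0" "\<forall>z s. dist z z0 < d \<longrightarrow> s \<in> {0..1} \<longrightarrow> \<bar>s - s1\<bar> < d \<longrightarrow> ups z \<in> U \<and> lL k (ups z) s = lL k x s1 + Ln (lin (ups z) k (\<gamma> s) / lin x k (\<gamma> s1))"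
          using lL_match[OF vp U(1) upsc ups0 U(2) lnz lL_cont lL_log s1] by blast
        then show "\<exists>d>0. \<forall>z s. dist z z0 < d \<longrightarrow> dist s s1 < d \<longrightarrow> s \<in> {0..1} \<longrightarrow> ups z \<in> U \<and> lL k (ups z) s = lL k x s1 + Ln (lin (ups z) k (\<gamma> s) / L0 k)"
          by (auto simp: dist_real_def L0_def)
      qed
      then show ?thesis using that by blast
    qed
    define r where "r = min \<rho> dm"
    have r: "r > 0" using \<rho> dm by (simp add: r_def)
    define ell where "ell k z t = lL k x s1 + Ln (lin (ups z) k t / L0 k)" for k z t
    define H where "H z t = exp (\<Sum>k\<in>UNIV. \<alpha> $ k * ell k z t)" for z t
    define H1 where "H1 z t = \<alpha> $ i * (b1 + b2 * t) / lin (ups z) i t * H z t" for z t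
    have good: "lin (ups z) k t / L0 k \<notin> \<real>\<^sub>\<le>\<^sub>0 \<and> lin (ups z) k t \<noteq> 0"
      if "z \<in> ball z0 r" "t \<in> ball (\<gamma> s1) \<rho>" for z t k
    proof -
      have "cmod (lin (ups z) k t - L0 k) < cmod (L0 k)"
        using \<rho>(2) that by (auto simp: r_def dist_commute)
      then show ?thesis using ratio_ok2[OF L0] by blast
    qed
    have z0r: "z0 \<in> ball z0 r" using r by simp
    have Lnhol: "(\<lambda>t. Ln (lin (ups z) k t / L0 k)) holomorphic_on ball (\<gamma> s1) \<rho>" if "z \<in> ball z0 r" for z k
      by (rule holomorphic_on_Ln') (use good[OF that] L0 in \<open>auto simp: lin_def intro!: holomorphic_intros\<close>)
    have Hhol: "H z holomorphic_on ball (\<gamma> s1) \<rho>" if "z \<in> ball z0 r" for z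
      unfolding H_def ell_def by (intro holomorphic_on_sum holomorphic_intros Lnhol[OF that])
    show "\<exists>\<epsilon>>0. \<forall>p q. p \<in> {0..1} \<longrightarrow> q \<in> {0..1} \<longrightarrow> p \<le> q
      \<longrightarrow> \<bar>p - s1\<bar> < \<epsilon> \<longrightarrow> \<bar>q - s1\<bar> < \<epsilon> \<longrightarrow> Bprop \<phi> \<phi>' z0 p q"
    proof (rule LOC[OF vp avoid_t ltc ltl ltb mu s1 \<rho>(1) r dm(1), where H=H and ?H1.0=H1])
      show "\<And>z. z \<in> ball z0 r \<Longrightarrow> H z holomorphic_on ball (\<gamma> s1) \<rho>" by (rule Hhol)
    next
      show "H1 z0 holomorphic_on ball (\<gamma> s1) \<rho>"
        unfolding H1_def lin_def using good[OF z0r]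
        by (intro holomorphic_intros Hhol[OF z0r]) (auto simp: lin_def)
    next
      fix z w assume z: "z \<in> ball z0 r" and w: "w \<in> ball (\<gamma> s1) \<rho>"
      have gz: "lin (ups z) i w / L0 i \<notin> \<real>\<^sub>\<le>\<^sub>0" "lin (ups z) i w \<noteq> 0" using good[OF z w] by auto
      have dk: "((\<lambda>z. \<alpha> $ k * ell k z w) has_field_derivative
          (if k = i then \<alpha> $ i * ((b1 + b2 * w) / lin (ups z) i w) else 0)) (at z)" for k
      proof (cases "k = i")
        case False
        have "(\<lambda>z. \<alpha> $ k * ell k z w) = (\<lambda>z. \<alpha> $ k * (lL k x s1 + Ln (lin x k w / L0 k)))"
          using False by (simp add: ell_def upsk)
        then show ?thesis using False by simp
      next
        case True
        define g where "g z' = ((a1 + z' * b1) + (a2 + z' * b2) * w) / L0 i" for z'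
        have eg: "ell i z' w = lL i x s1 + Ln (g z')" for z' by (simp add: ell_def g_def upsi)
        have gz': "g z = lin (ups z) i w / L0 i" by (simp add: g_def upsi)
        have "((\<lambda>z'. (a1 + z' * b1) + (a2 + z' * b2) * w) has_field_derivative b1 + b2 * w) (at z)"
          by (rule derivative_eq_intros refl | simp add: field_simps)+
        from DERIV_cdivide[OF this, of "L0 i"]
        have dg: "(g has_field_derivative (b1 + b2 * w) / L0 i) (at z)"
          unfolding g_def .
        have dL: "(Ln has_field_derivative inverse (g z)) (at (g z))"
          using gz(1) gz' by (intro has_field_derivative_Ln) simp
        have "((\<lambda>z. Ln (g z)) has_field_derivative inverse (g z) * ((b1 + b2 * w) / L0 i)) (at z)"
          by (rule DERIV_chain2[OF dL dg])
        from DERIV_cmult[OF DERIV_add[OF DERIV_const[of "lL i x s1"] this], of "\<alpha> $ i"]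
        have "((\<lambda>z. \<alpha> $ i * (lL i x s1 + Ln (g z))) has_field_derivative \<alpha> $ i * (0 + inverse (g z) * ((b1 + b2 * w) / L0 i))) (at z)" .
        moreover have "\<alpha> $ i * (0 + inverse (g z) * ((b1 + b2 * w) / L0 i)) = \<alpha> $ i * ((b1 + b2 * w) / lin (ups z) i w)"
          using gz' gz(2) L0[of i] by (simp add: field_simps)
        ultimately show ?thesis using True by (simp add: eg)
      qed
      have "((\<lambda>z. \<Sum>k\<in>UNIV. \<alpha> $ k * ell k z w) has_field_derivative
          (\<Sum>k\<in>UNIV. if k = i then \<alpha> $ i * ((b1 + b2 * w) / lin (ups z) i w) else 0)) (at z)"
        by (rule DERIV_sum) (rule dk)
      then have "((\<lambda>z. \<Sum>k\<in>UNIV. \<alpha> $ k * ell k z w) has_field_derivative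
          \<alpha> $ i * ((b1 + b2 * w) / lin (ups z) i w)) (at z)" by simp
      from DERIV_chain2[OF DERIV_exp this]
      show "((\<lambda>z. H z w) has_field_derivative H1 z w) (at z)"
        unfolding H_def H1_def by (simp add: mult_ac)
    next
      define P where "P = ball z0 r \<times> ball (\<gamma> s1) \<rho>"
      have lc: "continuous_on P (\<lambda>p. lin (ups (fst p)) k (snd p))" for k
        unfolding lin_def by (intro continuous_intros continuous_on_compose2[OF upsc]) auto
      have gP: "lin (ups (fst p)) k (snd p) / L0 k \<notin> \<real>\<^sub>\<le>\<^sub>0 \<and> lin (ups (fst p)) k (snd p) \<noteq> 0" if "p \<in> P" for p k
        using good[of "fst p" "snd p" k] that by (auto simp: P_def)
      have cl: "continuous_on P (\<lambda>p. Ln (lin (ups (fst p)) k (snd p) / L0 k))" for k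
        by (rule continuous_on_Ln') (use gP L0 in \<open>auto intro!: continuous_intros lc\<close>)
      have cH: "continuous_on P (\<lambda>p. H (fst p) (snd p))"
        unfolding H_def ell_def by (intro continuous_intros cl)
      have "continuous_on P (\<lambda>p. H1 (fst p) (snd p))"
        unfolding H1_def using gP by (intro continuous_intros cH lc) auto
      then show "continuous_on (ball z0 r \<times> ball (\<gamma> s1) \<rho>) (\<lambda>(z, w). H1 z w)"
        by (simp add: P_def split_beta)
    next
      fix z s assume z: "z \<in> ball z0 r" and s: "s \<in> {0..1}" "\<bar>s - s1\<bar> < dm"
      have zd: "dist z z0 < dm" using z by (simp add: r_def dist_commute)
      have sd: "dist s s1 < dm" using s by (simp add: dist_real_def)
      have m: "ups z \<in> U" "\<And>k. lL k (ups z) s = ell k z (\<gamma> s)"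
        using dm(2)[OF zd sd s(1)] by (auto simp: ell_def)
      have "(\<Prod>k\<in>UNIV. pw (lin (ups z) k (\<gamma> s)) (lL k (ups z) s) (\<alpha> $ k)) = exp (\<Sum>k\<in>UNIV. \<alpha> $ k * lL k (ups z) s)"
        by (rule prod_pw_exp) (use lnz m(1) s(1) in blast)
      also have "\<dots> = H z (\<gamma> s)" by (simp add: H_def m(2))
      finally show "\<phi> z s = pw (\<gamma> s) (lt s) (- \<delta> - 1) * H z (\<gamma> s) * vd \<gamma> s"
        by (simp add: \<phi>_def integrand_def)
    next
      fix s assume s: "s \<in> {0..1}" "\<bar>s - s1\<bar> < dm"
      have zd: "dist z0 z0 < dm" using dm by simp
      have sd: "dist s s1 < dm" using s by (simp add: dist_real_def)
      have m: "\<And>k. lL k x s = ell k z0 (\<gamma> s)"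
        using dm(2)[OF zd sd s(1)] ups0 by (auto simp: ell_def)
      have lx: "lin x i (\<gamma> s) \<noteq> 0" using lnz U(2) s(1) by blast
      have ex: "exp (lL i x s) = lin x i (\<gamma> s)" using lL_log U(2) s(1) lx by blast
      have "(\<Prod>k\<in>UNIV. pw (lin x k (\<gamma> s)) (lL k x s) ((\<alpha> - axis i 1) $ k)) = exp (\<Sum>k\<in>UNIV. (\<alpha> - axis i 1) $ k * lL k x s)"
        by (rule prod_pw_exp) (use lnz U(2) s(1) in blast)
      also have "\<dots> = exp ((\<Sum>k\<in>UNIV. \<alpha> $ k * lL k x s) - lL i x s)" unfolding sum_axis ..
      also have "\<dots> = H z0 (\<gamma> s) / lin x i (\<gamma> s)" unfolding exp_diff ex by (simp add: H_def m)
      finally have P: "(\<Prod>k\<in>UNIV. pw (lin x k (\<gamma> s)) (lL k x s) ((\<alpha> - axis i 1) $ k)) = H z0 (\<gamma> s) / lin x i (\<gamma> s)" .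
      show "\<phi>' s = pw (\<gamma> s) (lt s) (- \<delta> - 1) * H1 z0 (\<gamma> s) * vd \<gamma> s"
        unfolding \<phi>'_def integrand_def P H1_def ups0 by (simp add: field_simps)
    qed
  qed
  then have B: "((\<lambda>z. integral {0..1} (\<phi> z)) has_field_derivative integral {0..1} \<phi>') (at z0)"
    "\<forall>\<^sub>F z in nhds z0. \<phi> z integrable_on {0..1}"
    unfolding Bprop_def by blast+
  have "\<phi> z0 integrable_on {0..1}" using eventually_nhds_x_imp_x[OF B(2)] .
  then have "(\<lambda>s. integrand \<gamma> lt lL \<alpha> \<delta> x s * vd \<gamma> s) integrable_on {0..1}"
    unfolding \<phi>_def ups0 .
  moreover have "((\<lambda>z. Phi \<gamma> lt lL \<alpha> \<delta> (ups z)) has_field_derivative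
          integral {0..1} (\<lambda>s. \<alpha> $ i * ((b1 + b2 * \<gamma> s) * integrand \<gamma> lt lL (\<alpha> - axis i 1) \<delta> x s) * vd \<gamma> s)) (at z0)"
    using B(1) unfolding \<phi>_def \<phi>'_def Phi_def .
  ultimately show ?thesis by blast
qed

lemma pw_shift:
  assumes "\<gamma> s \<noteq> 0 \<Longrightarrow> exp (lt s) = \<gamma> s"
  shows "\<gamma> s * pw (\<gamma> s) (lt s) c = pw (\<gamma> s) (lt s) (c + 1)"
proof (cases "\<gamma> s = 0")
  case True then show ?thesis by (simp add: pw_def)
next
  case False
  then have "\<gamma> s * exp (c * lt s) = exp ((c + 1) * lt s)"
    using assms by (simp add: distrib_right exp_add)
  then show ?thesis using False by (simp add: pw_def)
qed

locale setting =
  fixes \<gamma> :: "real \<Rightarrow> complex" and lt :: "real \<Rightarrow> complex"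
    and lL :: "'n::finite \<Rightarrow> (complex^'n) \<times> (complex^'n) \<Rightarrow> real \<Rightarrow> complex"
    and U :: "((complex^'n) \<times> (complex^'n)) set"
  assumes vp: "valid_path \<gamma>" and Uo: "open U"
    and avoid_t: "\<forall>s\<in>{0<..<1}. \<gamma> s \<noteq> 0"
    and avoid_L: "\<forall>y\<in>U. \<forall>s\<in>{0<..<1}. \<forall>i. lin y i (\<gamma> s) \<noteq> 0"
    and ltc: "continuous_on {s\<in>{0..1}. \<gamma> s \<noteq> 0} lt"
    and ltl: "\<forall>s\<in>{0..1}. \<gamma> s \<noteq> 0 \<longrightarrow> exp (lt s) = \<gamma> s"
    and ltb: "bounded (Im ` lt ` {s\<in>{0..1}. \<gamma> s \<noteq> 0})"
    and lL_cont: "\<forall>i. continuous_on {(y, s). y \<in> U \<and> s \<in> {0..1} \<and> lin y i (\<gamma> s) \<noteq> 0}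
                        (\<lambda>(y, s). lL i y s)"
    and lL_log: "\<forall>i. \<forall>y\<in>U. \<forall>s\<in>{0..1}. lin y i (\<gamma> s) \<noteq> 0 \<longrightarrow> exp (lL i y s) = lin y i (\<gamma> s)"
begin

lemma D1:
  assumes x: "x \<in> U" and mu: "Re (- \<delta> - 1) > 0"
  shows "((\<lambda>z. Phi \<gamma> lt lL \<alpha> \<delta> (upd1 x i z)) has_field_derivative \<alpha> $ i * Phi \<gamma> lt lL (\<alpha> - axis i 1) \<delta> x) (at (fst x $ i))"
    and "(\<lambda>s. integrand \<gamma> lt lL \<alpha> \<delta> x s * vd \<gamma> s) integrable_on {0..1}"
proof -
  note C = core[OF vp Uo x avoid_t avoid_L ltc ltl ltb lL_cont lL_log mu upd1_cont upd1_self,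
      where ?a1.0 = 0 and ?b1.0 = 1 and ?a2.0 = "snd x $ i" and ?b2.0 = 0 and \<alpha> = \<alpha>]
  have h1: "(\<And>z k t. k \<noteq> i \<Longrightarrow> lin (upd1 x i z) k t = lin x k t)" by (simp add: lin_upd1)
  have h2: "(\<And>z t. lin (upd1 x i z) i t = (0 + z * 1) + (snd x $ i + z * 0) * t)" by (simp add: lin_upd1)
  note C' = C[OF h1 h2]
  have "integral {0..1} (\<lambda>s. \<alpha> $ i * ((1 + 0 * \<gamma> s) * integrand \<gamma> lt lL (\<alpha> - axis i 1) \<delta> x s) * vd \<gamma> s)
      = \<alpha> $ i * Phi \<gamma> lt lL (\<alpha> - axis i 1) \<delta> x"
    unfolding Phi_def by (simp add: mult.assoc integral_mult_right)
  then show "((\<lambda>z. Phi \<gamma> lt lL \<alpha> \<delta> (upd1 x i z)) has_field_derivative \<alpha> $ i * Phi \<gamma> lt lL (\<alpha> - axis i 1) \<delta> x) (at (fst x $ i))"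
    using C' by simp
  show "(\<lambda>s. integrand \<gamma> lt lL \<alpha> \<delta> x s * vd \<gamma> s) integrable_on {0..1}" using C' by blast
qed

lemma D2:
  assumes x: "x \<in> U" and mu: "Re (- \<delta> - 1) > 0"
  shows "((\<lambda>z. Phi \<gamma> lt lL \<alpha> \<delta> (upd2 x i z)) has_field_derivative \<alpha> $ i * Phi \<gamma> lt lL (\<alpha> - axis i 1) (\<delta> - 1) x) (at (snd x $ i))"
proof -
  note C = core[OF vp Uo x avoid_t avoid_L ltc ltl ltb lL_cont lL_log mu upd2_cont upd2_self,
      where ?a1.0 = "fst x $ i" and ?b1.0 = 0 and ?a2.0 = 0 and ?b2.0 = 1 and \<alpha> = \<alpha>]
  have h1: "(\<And>z k t. k \<noteq> i \<Longrightarrow> lin (upd2 x i z) k t = lin x k t)" by (simp add: lin_upd2)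
  have h2: "(\<And>z t. lin (upd2 x i z) i t = (fst x $ i + z * 0) + (0 + z * 1) * t)" by (simp add: lin_upd2)
  note C' = C[OF h1 h2]
  have "integral {0..1} (\<lambda>s. \<alpha> $ i * ((0 + 1 * \<gamma> s) * integrand \<gamma> lt lL (\<alpha> - axis i 1) \<delta> x s) * vd \<gamma> s)
      = integral {0..1} (\<lambda>s. \<alpha> $ i * (integrand \<gamma> lt lL (\<alpha> - axis i 1) (\<delta> - 1) x s * vd \<gamma> s))"
  proof (rule integral_cong)
    fix s :: real assume s: "s \<in> {0..1}"
    have "\<gamma> s * pw (\<gamma> s) (lt s) (- \<delta> - 1) = pw (\<gamma> s) (lt s) (- \<delta> - 1 + 1)"
      by (rule pw_shift) (use ltl s in auto)
    then have "\<gamma> s * integrand \<gamma> lt lL (\<alpha> - axis i 1) \<delta> x s = integrand \<gamma> lt lL (\<alpha> - axis i 1) (\<delta> - 1) x s"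
      unfolding integrand_def by (simp add: mult.assoc[symmetric])
    then show "\<alpha> $ i * ((0 + 1 * \<gamma> s) * integrand \<gamma> lt lL (\<alpha> - axis i 1) \<delta> x s) * vd \<gamma> s
      = \<alpha> $ i * (integrand \<gamma> lt lL (\<alpha> - axis i 1) (\<delta> - 1) x s * vd \<gamma> s)" by simp
  qed
  also have "\<dots> = \<alpha> $ i * Phi \<gamma> lt lL (\<alpha> - axis i 1) (\<delta> - 1) x"
    unfolding Phi_def by (simp add: integral_mult_right)
  finally show ?thesis using C' by simp
qed

lemma P1:
  assumes "x \<in> U" "Re (- \<delta> - 1) > 0"
  shows "pd1 (Phi \<gamma> lt lL \<alpha> \<delta>) i x = \<alpha> $ i * Phi \<gamma> lt lL (\<alpha> - axis i 1) \<delta> x"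
  unfolding pd1_def by (rule DERIV_imp_deriv[OF D1(1)[OF assms]])

lemma P2:
  assumes "x \<in> U" "Re (- \<delta> - 1) > 0"
  shows "pd2 (Phi \<gamma> lt lL \<alpha> \<delta>) i x = \<alpha> $ i * Phi \<gamma> lt lL (\<alpha> - axis i 1) (\<delta> - 1) x"
  unfolding pd2_def by (rule DERIV_imp_deriv[OF D2[OF assms]])

lemma P2k:
  assumes "x \<in> U" "Re (- \<delta> - 1) > 0" "i \<noteq> k"
  shows "pd2 (\<lambda>y. snd y $ k * Phi \<gamma> lt lL \<alpha> \<delta> y) i x = snd x $ k * (\<alpha> $ i * Phi \<gamma> lt lL (\<alpha> - axis i 1) (\<delta> - 1) x)"
proof -
  have "((\<lambda>z. snd x $ k * Phi \<gamma> lt lL \<alpha> \<delta> (upd2 x i z)) has_field_derivative snd x $ k * (\<alpha> $ i * Phi \<gamma> lt lL (\<alpha> - axis i 1) (\<delta> - 1) x)) (at (snd x $ i))"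
    by (rule DERIV_cmult[OF D2[OF assms(1,2)]])
  moreover have "snd (upd2 x i z) $ k = snd x $ k" for z using assms(3) by (simp add: upd2_def)
  ultimately show ?thesis unfolding pd2_def by (simp add: DERIV_imp_deriv)
qed

end

lemma log_deriv:
  fixes f l :: "real \<Rightarrow> complex"
  assumes D: "(f has_vector_derivative D) (at s)" and fs: "f s \<noteq> 0" and d: "d > 0"
    and eq: "\<And>\<sigma>. \<bar>\<sigma> - s\<bar> < d \<Longrightarrow> l \<sigma> = l s + Ln (f \<sigma> / f s)"
  shows "(l has_vector_derivative D / f s) (at s)"
proof -
  have hg: "((\<lambda>z. l s + Ln (z / f s)) has_field_derivative inverse (f s / f s) * (1 / f s)) (at (f s))"
  proof -
    have "((\<lambda>z. z / f s) has_field_derivative 1 / f s) (at (f s))"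
      using DERIV_cdivide[OF DERIV_ident, of "f s" "f s"] by simp
    moreover have "(Ln has_field_derivative inverse (f s / f s)) (at (f s / f s))"
      using fs by (intro has_field_derivative_Ln) (simp add: nonpos_Reals_def)
    ultimately have "((\<lambda>z. Ln (z / f s)) has_field_derivative inverse (f s / f s) * (1 / f s)) (at (f s))"
      by (rule DERIV_chain2[rotated])
    from DERIV_add[OF DERIV_const[of "l s"] this] show ?thesis by simp
  qed
  have "((\<lambda>x. l s + Ln (f x / f s)) has_vector_derivative D * (inverse (f s / f s) * (1 / f s))) (at s)"
    using field_vector_diff_chain_at[OF D hg] by (simp add: o_def)
  then have "((\<lambda>x. l s + Ln (f x / f s)) has_vector_derivative D / f s) (at s)"
    using fs by (simp add: field_simps)
  then show ?thesis
  proof (rule has_vector_derivative_transform_within_open[of _ _ _ "ball s d"])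
    show "open (ball s d)" by simp
    show "s \<in> ball s d" using d by simp
  next
    fix y assume "y \<in> ball s d"
    then show "l s + Ln (f y / f s) = l y" using eq[of y] by (simp add: dist_real_def abs_minus_commute)
  qed
qed

context setting
begin

lemma lnz: "\<forall>y\<in>U. \<forall>s\<in>{0..1}. \<forall>k. lin y k (\<gamma> s) \<noteq> 0"
  using lin_nz[OF vp Uo avoid_L] by blast

lemma integrand_exp:
  assumes x: "x \<in> U" and s: "s \<in> {0<..<1}"
  shows "integrand \<gamma> lt lL \<beta> d x s = exp ((- d - 1) * lt s + (\<Sum>k\<in>UNIV. \<beta> $ k * lL k x s))"
proof -
  have g: "\<gamma> s \<noteq> 0" using avoid_t s by auto
  have "(\<Prod>k\<in>UNIV. pw (lin x k (\<gamma> s)) (lL k x s) (\<beta> $ k)) = exp (\<Sum>k\<in>UNIV. \<beta> $ k * lL k x s)"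
    by (rule prod_pw_exp) (use lnz x s in auto)
  then show ?thesis using g by (simp add: integrand_def pw_def exp_add)
qed

lemma gfun_exp:
  assumes x: "x \<in> U" and s: "s \<in> {0<..<1}"
  shows "gfun \<gamma> lt lL \<alpha> \<delta> x s = exp ((- \<delta>) * lt s + (\<Sum>k\<in>UNIV. \<alpha> $ k * lL k x s))"
proof -
  have g: "\<gamma> s \<noteq> 0" using avoid_t s by auto
  have "(\<Prod>k\<in>UNIV. pw (lin x k (\<gamma> s)) (lL k x s) (\<alpha> $ k)) = exp (\<Sum>k\<in>UNIV. \<alpha> $ k * lL k x s)"
    by (rule prod_pw_exp) (use lnz x s in auto)
  moreover have "exp ((- \<delta>) * lt s + (\<Sum>k\<in>UNIV. \<alpha> $ k * lL k x s)) = exp ((- \<delta>) * lt s) * exp (\<Sum>k\<in>UNIV. \<alpha> $ k * lL k x s)"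
    by (rule exp_add)
  ultimately show ?thesis using g by (simp only: gfun_def pw_def if_False)
qed

lemma lL_sderiv:
  assumes x: "x \<in> U" and s: "s \<in> {0<..<1}" and D: "(\<gamma> has_vector_derivative D) (at s)"
  shows "((\<lambda>\<sigma>. lL k x \<sigma>) has_vector_derivative snd x $ k * D / lin x k (\<gamma> s)) (at s)"
proof -
  have s1: "s \<in> {0..1}" using s by auto
  obtain d where d: "d > 0" "\<forall>z \<sigma>. dist z (0::complex) < d \<longrightarrow> \<sigma> \<in> {0..1} \<longrightarrow> \<bar>\<sigma> - s\<bar> < d \<longrightarrow>
      (\<lambda>_. x) z \<in> U \<and> lL k ((\<lambda>_. x) z) \<sigma> = lL k x s + Ln (lin ((\<lambda>_. x) z) k (\<gamma> \<sigma>) / lin x k (\<gamma> s))"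
    using lL_match[OF vp Uo continuous_on_const refl x lnz lL_cont lL_log s1, where k=k] by blast
  define e where "e = min d (min s (1 - s))"
  have e: "e > 0" using d s by (simp add: e_def)
  have Dl: "((\<lambda>\<sigma>. lin x k (\<gamma> \<sigma>)) has_vector_derivative snd x $ k * D) (at s)"
    unfolding lin_def
    using has_vector_derivative_add[OF has_vector_derivative_const has_vector_derivative_mult_right[OF D, of "snd x $ k"], of "fst x $ k"]
    by simp
  have "((\<lambda>\<sigma>. lL k x \<sigma>) has_vector_derivative snd x $ k * D / lin x k (\<gamma> s)) (at s)"
  proof (rule log_deriv[OF Dl _ e])
    show "lin x k (\<gamma> s) \<noteq> 0" using lnz x s1 by blast
  next
    fix \<sigma> assume "\<bar>\<sigma> - s\<bar> < e"
    then have "\<sigma> \<in> {0..1}" "\<bar>\<sigma> - s\<bar> < d" using s by (auto simp: e_def)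
    then show "lL k x \<sigma> = lL k x s + Ln (lin x k (\<gamma> \<sigma>) / lin x k (\<gamma> s))"
      using d(2)[rule_format, of 0 \<sigma>] d(1) by auto
  qed
  then show ?thesis .
qed

end

lemma sum_remove_k:
  fixes f :: "'n::finite \<Rightarrow> complex"
  shows "(\<Sum>j\<in>UNIV. f j) = f k + (\<Sum>j\<in>UNIV - {k}. f j)"
  by (rule sum.remove) auto

lemma alg2:
  fixes \<alpha> x1 x2 L :: "'n::finite \<Rightarrow> complex" and t E v \<delta> :: complex
  assumes L: "\<And>j. L j = x1 j + x2 j * t" "\<And>j. L j \<noteq> 0" and t: "t \<noteq> 0"
  shows "(\<Sum>i\<in>UNIV - {k}. (x1 i * x2 k - x1 k * x2 i) * (\<alpha> i * (E / L k * t / L i * v))) + (\<Sum>j\<in>UNIV. \<alpha> j) * x1 k * (E / L k * v)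
     = ((\<Sum>j\<in>UNIV. \<alpha> j) - \<delta>) * (E * v) - E * t * (- \<delta> * (v / t) + (\<Sum>j\<in>UNIV. \<alpha> j * (x2 j * v / L j)))"
proof -
  have r: "((\<Sum>j\<in>UNIV. \<alpha> j) - \<delta>) * (E * v) - E * t * (- \<delta> * (v / t) + (\<Sum>j\<in>UNIV. \<alpha> j * (x2 j * v / L j)))
      = E * v * (\<Sum>j\<in>UNIV. \<alpha> j * x1 j / L j)"
  proof -
    have "((\<Sum>j\<in>UNIV. \<alpha> j) - \<delta>) * (E * v) - E * t * (- \<delta> * (v / t) + (\<Sum>j\<in>UNIV. \<alpha> j * (x2 j * v / L j)))
        = E * v * ((\<Sum>j\<in>UNIV. \<alpha> j) - (\<Sum>j\<in>UNIV. \<alpha> j * (x2 j * t / L j)))"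
      using t by (simp add: algebra_simps sum_distrib_left sum_divide_distrib)
    also have "(\<Sum>j\<in>UNIV. \<alpha> j) - (\<Sum>j\<in>UNIV. \<alpha> j * (x2 j * t / L j)) = (\<Sum>j\<in>UNIV. \<alpha> j * x1 j / L j)"
    proof -
      have "(\<Sum>j\<in>UNIV. \<alpha> j) - (\<Sum>j\<in>UNIV. \<alpha> j * (x2 j * t / L j)) = (\<Sum>j\<in>UNIV. \<alpha> j - \<alpha> j * (x2 j * t / L j))"
        by (simp add: sum_subtractf)
      also have "\<dots> = (\<Sum>j\<in>UNIV. \<alpha> j * x1 j / L j)"
      proof (rule sum.cong)
        fix j :: 'n
        have "\<alpha> j - \<alpha> j * (x2 j * t / L j) = \<alpha> j * (L j - x2 j * t) / L j"
          using L(2)[of j] by (simp add: field_simps)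
        then show "\<alpha> j - \<alpha> j * (x2 j * t / L j) = \<alpha> j * x1 j / L j" using L(1)[of j] by simp
      qed simp
      finally show ?thesis .
    qed
    finally show ?thesis .
  qed
  have l: "(\<Sum>i\<in>UNIV - {k}. (x1 i * x2 k - x1 k * x2 i) * (\<alpha> i * (E / L k * t / L i * v))) + (\<Sum>j\<in>UNIV. \<alpha> j) * x1 k * (E / L k * v)
      = E * v * (\<Sum>j\<in>UNIV. \<alpha> j * x1 j / L j)"
  proof -
    have "(\<Sum>j\<in>UNIV. \<alpha> j) * x1 k * (E / L k * v) = E * v * (\<alpha> k * x1 k / L k) + (\<Sum>j\<in>UNIV - {k}. E * v * (\<alpha> j * x1 k / L k))"
      unfolding sum_remove_k[of \<alpha> k] by (simp add: algebra_simps sum_distrib_left sum_distrib_right)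
    moreover have "(\<Sum>i\<in>UNIV - {k}. (x1 i * x2 k - x1 k * x2 i) * (\<alpha> i * (E / L k * t / L i * v))) + (\<Sum>j\<in>UNIV - {k}. E * v * (\<alpha> j * x1 k / L k))
        = (\<Sum>j\<in>UNIV - {k}. E * v * (\<alpha> j * x1 j / L j))"
      unfolding sum.distrib[symmetric]
    proof (rule sum.cong)
      fix j assume "j \<in> UNIV - {k}"
      have h: "(x1 j * x2 k - x1 k * x2 j) * t + x1 k * L j = x1 j * L k" using L(1)[of j] L(1)[of k]
        by (simp add: algebra_simps)
      have "(x1 j * x2 k - x1 k * x2 j) * (\<alpha> j * (E / L k * t / L j * v)) + E * v * (\<alpha> j * x1 k / L k)
          = \<alpha> j * E * v / (L k * L j) * ((x1 j * x2 k - x1 k * x2 j) * t + x1 k * L j)"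
        using L(2)[of j] L(2)[of k] by (simp add: field_simps)
      also have "\<dots> = \<alpha> j * E * v / (L k * L j) * (x1 j * L k)" by (simp only: h)
      also have "\<dots> = E * v * (\<alpha> j * x1 j / L j)" using L(2)[of j] L(2)[of k] by (simp add: field_simps)
      finally show "(x1 j * x2 k - x1 k * x2 j) * (\<alpha> j * (E / L k * t / L j * v)) + E * v * (\<alpha> j * x1 k / L k) = E * v * (\<alpha> j * x1 j / L j)" .
    qed simp
    ultimately show ?thesis
      unfolding sum_remove_k[of "\<lambda>j. \<alpha> j * x1 j / L j" k] by (simp add: algebra_simps sum_distrib_left)
  qed
  show ?thesis using l r by simp
qed

lemma alg4:
  fixes \<alpha> x1 x2 L :: "'n::finite \<Rightarrow> complex" and t E v \<delta> :: complex
  assumes L: "\<And>j. L j = x1 j + x2 j * t" "\<And>j. L j \<noteq> 0" and t: "t \<noteq> 0"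
  shows "(\<Sum>i\<in>UNIV - {k}. x1 k * x2 i * (\<alpha> i * (E / L k * t / L i * v)))
       + (\<Sum>i\<in>UNIV - {k}. x2 i * (x2 k * (\<alpha> i * (E / L k * t / L i * t * v))))
       + \<alpha> k * (x2 k * (E / L k * t * v))
     = \<delta> * (E * v) + E * t * (- \<delta> * (v / t) + (\<Sum>j\<in>UNIV. \<alpha> j * (x2 j * v / L j)))"
proof -
  have r: "\<delta> * (E * v) + E * t * (- \<delta> * (v / t) + (\<Sum>j\<in>UNIV. \<alpha> j * (x2 j * v / L j)))
      = (\<Sum>j\<in>UNIV. E * v * t * (\<alpha> j * x2 j / L j))"
    using t by (simp add: algebra_simps sum_distrib_left)
  have "(\<Sum>i\<in>UNIV - {k}. x1 k * x2 i * (\<alpha> i * (E / L k * t / L i * v)))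
       + (\<Sum>i\<in>UNIV - {k}. x2 i * (x2 k * (\<alpha> i * (E / L k * t / L i * t * v))))
      = (\<Sum>j\<in>UNIV - {k}. E * v * t * (\<alpha> j * x2 j / L j))"
    unfolding sum.distrib[symmetric]
  proof (rule sum.cong)
    fix j assume "j \<in> UNIV - {k}"
    have "x1 k * x2 j * (\<alpha> j * (E / L k * t / L j * v)) + x2 j * (x2 k * (\<alpha> j * (E / L k * t / L j * t * v)))
        = \<alpha> j * x2 j * E * v * t / (L k * L j) * (x1 k + x2 k * t)"
      using L(2)[of j] L(2)[of k] by (simp add: field_simps)
    also have "\<dots> = \<alpha> j * x2 j * E * v * t / (L k * L j) * L k" by (simp only: L(1)[of k])
    also have "\<dots> = E * v * t * (\<alpha> j * x2 j / L j)" using L(2)[of j] L(2)[of k] by (simp add: field_simps)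
    finally show "x1 k * x2 j * (\<alpha> j * (E / L k * t / L j * v)) + x2 j * (x2 k * (\<alpha> j * (E / L k * t / L j * t * v)))
        = E * v * t * (\<alpha> j * x2 j / L j)" .
  qed simp
  moreover have "\<alpha> k * (x2 k * (E / L k * t * v)) = E * v * t * (\<alpha> k * x2 k / L k)" by simp
  ultimately show ?thesis
    unfolding r sum_remove_k[of "\<lambda>j. E * v * t * (\<alpha> j * x2 j / L j)" k] by (simp add: algebra_simps)
qed

context setting
begin

lemma shift_e:
  assumes x: "x \<in> U" and s: "s \<in> {0<..<1}"
  shows "integrand \<gamma> lt lL (\<beta> - axis i 1) d x s = integrand \<gamma> lt lL \<beta> d x s / lin x i (\<gamma> s)"
proof -
  have s1: "s \<in> {0..1}" using s by auto
  have el: "exp (lL i x s) = lin x i (\<gamma> s)" using lL_log lnz x s1 by blast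
  have "exp ((- d - 1) * lt s + ((\<Sum>k\<in>UNIV. \<beta> $ k * lL k x s) - lL i x s))
      = exp ((- d - 1) * lt s + (\<Sum>k\<in>UNIV. \<beta> $ k * lL k x s)) / exp (lL i x s)"
    by (simp add: exp_diff[symmetric] algebra_simps)
  then show ?thesis
    unfolding integrand_exp[OF x s] sum_axis el .
qed

lemma shift_d:
  assumes x: "x \<in> U" and s: "s \<in> {0<..<1}"
  shows "integrand \<gamma> lt lL \<beta> (d - 1) x s = integrand \<gamma> lt lL \<beta> d x s * \<gamma> s"
proof -
  have s1: "s \<in> {0..1}" and g: "\<gamma> s \<noteq> 0" using s avoid_t by auto
  have el: "exp (lt s) = \<gamma> s" using ltl s1 g by blast
  have "exp ((- (d - 1) - 1) * lt s + (\<Sum>k\<in>UNIV. \<beta> $ k * lL k x s))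
      = exp ((- d - 1) * lt s + (\<Sum>k\<in>UNIV. \<beta> $ k * lL k x s)) * exp (lt s)"
    by (simp add: exp_add[symmetric] algebra_simps)
  then show ?thesis
    unfolding integrand_exp[OF x s] el .
qed

lemma gfun_E:
  assumes x: "x \<in> U" and s: "s \<in> {0<..<1}"
  shows "gfun \<gamma> lt lL \<alpha> \<delta> x s = integrand \<gamma> lt lL \<alpha> \<delta> x s * \<gamma> s"
proof -
  have s1: "s \<in> {0..1}" and g: "\<gamma> s \<noteq> 0" using s avoid_t by auto
  have el: "exp (lt s) = \<gamma> s" using ltl s1 g by blast
  have "exp ((- \<delta>) * lt s + (\<Sum>k\<in>UNIV. \<alpha> $ k * lL k x s))
      = exp ((- \<delta> - 1) * lt s + (\<Sum>k\<in>UNIV. \<alpha> $ k * lL k x s)) * exp (lt s)"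
    by (simp add: exp_add[symmetric] algebra_simps)
  then show ?thesis
    unfolding integrand_exp[OF x s] gfun_exp[OF x s] el .
qed

lemma gfun_FTC:
  assumes x: "x \<in> U" and d: "Re (- \<delta>) > 0"
  shows "((\<lambda>s. gfun \<gamma> lt lL \<alpha> \<delta> x s * (- \<delta> * (vd \<gamma> s / \<gamma> s) + (\<Sum>k\<in>UNIV. \<alpha> $ k * (snd x $ k * vd \<gamma> s / lin x k (\<gamma> s)))))
          has_integral (gfun \<gamma> lt lL \<alpha> \<delta> x 1 - gfun \<gamma> lt lL \<alpha> \<delta> x 0)) {0..1}"
proof -
  obtain S where S: "finite S" "\<And>s. s \<in> {0<..<1} - S \<Longrightarrow> (\<gamma> has_vector_derivative vd \<gamma> s) (at s)"
    using vp_deriv[OF vp] by blast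
  show ?thesis
  proof (rule fundamental_theorem_of_calculus_interior_strong[OF S(1)])
    fix s assume s: "s \<in> {0<..<1} - S"
    then have s0: "s \<in> {0<..<1}" by auto
    have gs: "\<gamma> s \<noteq> 0" using avoid_t s0 by auto
    note D = S(2)[OF s]
    have dlt: "(lt has_vector_derivative vd \<gamma> s / \<gamma> s) (at s)"
      by (rule lt_deriv[OF s0 gs D vp ltc ltl])
    have dI: "((\<lambda>\<sigma>. (- \<delta>) * lt \<sigma> + (\<Sum>k\<in>UNIV. \<alpha> $ k * lL k x \<sigma>)) has_vector_derivative
        (- \<delta>) * (vd \<gamma> s / \<gamma> s) + (\<Sum>k\<in>UNIV. \<alpha> $ k * (snd x $ k * vd \<gamma> s / lin x k (\<gamma> s)))) (at s)"
      by (intro has_vector_derivative_add has_vector_derivative_mult_right has_vector_derivative_sum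
          dlt lL_sderiv[OF x s0 D])
    from field_vector_diff_chain_at[OF dI DERIV_exp]
    have "((\<lambda>\<sigma>. exp ((- \<delta>) * lt \<sigma> + (\<Sum>k\<in>UNIV. \<alpha> $ k * lL k x \<sigma>))) has_vector_derivative
        ((- \<delta>) * (vd \<gamma> s / \<gamma> s) + (\<Sum>k\<in>UNIV. \<alpha> $ k * (snd x $ k * vd \<gamma> s / lin x k (\<gamma> s))))
         * exp ((- \<delta>) * lt s + (\<Sum>k\<in>UNIV. \<alpha> $ k * lL k x s))) (at s)"
      by (simp add: o_def)
    then have "((\<lambda>\<sigma>. exp ((- \<delta>) * lt \<sigma> + (\<Sum>k\<in>UNIV. \<alpha> $ k * lL k x \<sigma>))) has_vector_derivative
        gfun \<gamma> lt lL \<alpha> \<delta> x s * (- \<delta> * (vd \<gamma> s / \<gamma> s) + (\<Sum>k\<in>UNIV. \<alpha> $ k * (snd x $ k * vd \<gamma> s / lin x k (\<gamma> s))))) (at s)"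
      unfolding gfun_exp[OF x s0] by (simp add: mult.commute)
    then show "(gfun \<gamma> lt lL \<alpha> \<delta> x has_vector_derivative
        gfun \<gamma> lt lL \<alpha> \<delta> x s * (- \<delta> * (vd \<gamma> s / \<gamma> s) + (\<Sum>k\<in>UNIV. \<alpha> $ k * (snd x $ k * vd \<gamma> s / lin x k (\<gamma> s))))) (at s)"
    proof (rule has_vector_derivative_transform_within_open[OF _ open_greaterThanLessThan])
      show "s \<in> {0<..<1}" by (rule s0)
    next
      fix y :: real assume "y \<in> {0<..<1}"
      then show "exp ((- \<delta>) * lt y + (\<Sum>k\<in>UNIV. \<alpha> $ k * lL k x y)) = gfun \<gamma> lt lL \<alpha> \<delta> x y"
        using gfun_exp[OF x] by simp
    qed
  next
    have c1: "continuous_on {0..1} (\<lambda>s. pw (\<gamma> s) (lt s) (- \<delta>))"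
      by (rule pw_cont_on[OF vp ltc ltl ltb d]) simp
    have cl: "continuous_on {0..1} (\<lambda>s. lL k x s)" for k
    proof -
      have c: "continuous_on {0..1} (\<lambda>s::real. (x, s))" by (intro continuous_intros)
      have sub: "(\<lambda>s::real. (x, s)) ` {0..1} \<subseteq> {(y, s). y \<in> U \<and> s \<in> {0..1} \<and> lin y k (\<gamma> s) \<noteq> 0}"
        using lnz x by auto
      from continuous_on_compose2[OF lL_cont[rule_format, of k] c sub]
      show ?thesis by simp
    qed
    have c2: "continuous_on {0..1} (\<lambda>s. \<Prod>k\<in>UNIV. pw (lin x k (\<gamma> s)) (lL k x s) (\<alpha> $ k))"
    proof (rule continuous_on_prod)
      fix k :: 'n assume "k \<in> UNIV"
      have "continuous_on {0..1} (\<lambda>s. exp (\<alpha> $ k * lL k x s))"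
        by (intro continuous_intros cl)
      then show "continuous_on {0..1} (\<lambda>s. pw (lin x k (\<gamma> s)) (lL k x s) (\<alpha> $ k))"
        by (rule continuous_on_eq) (use lnz x in \<open>auto simp: pw_def\<close>)
    qed
    show "continuous_on {0..1} (gfun \<gamma> lt lL \<alpha> \<delta> x)"
      unfolding gfun_def using continuous_on_mult[OF c1 c2] by simp
  qed simp
qed

end

context setting
begin

lemma Phi_has_int:
  assumes x: "x \<in> U" and mu: "Re (- d - 1) > 0"
  shows "((\<lambda>s. integrand \<gamma> lt lL \<beta> d x s * vd \<gamma> s) has_integral Phi \<gamma> lt lL \<beta> d x) {0..1}"
  unfolding Phi_def using D1(2)[OF x mu, of \<beta>] by (rule integrable_integral)

lemma rel2:
  assumes x: "x \<in> U" and mu: "Re (- \<delta> - 1) > 0"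
  shows "(\<Sum>i\<in>UNIV - {k}. (fst x $ i * snd x $ k - fst x $ k * snd x $ i)
                         * pd2 (Phi \<gamma> lt lL (\<alpha> - axis k 1) \<delta>) i x)
       + (\<Sum>i\<in>UNIV. \<alpha> $ i) * fst x $ k * Phi \<gamma> lt lL (\<alpha> - axis k 1) \<delta> x
     = ((\<Sum>i\<in>UNIV. \<alpha> $ i) - \<delta>) * Phi \<gamma> lt lL \<alpha> \<delta> x
       - (gfun \<gamma> lt lL \<alpha> \<delta> x 1 - gfun \<gamma> lt lL \<alpha> \<delta> x 0)"
proof -
  define A where "A = \<alpha> - axis k 1"
  have mu1: "Re (- (\<delta> - 1) - 1) > 0" using mu by simp
  have md: "Re (- \<delta>) > 0" using mu by simp
  define c where "c i = fst x $ i * snd x $ k - fst x $ k * snd x $ i" for i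
  define fI where "fI i s = integrand \<gamma> lt lL (A - axis i 1) (\<delta> - 1) x s * vd \<gamma> s" for i s
  define fJ where "fJ s = integrand \<gamma> lt lL A \<delta> x s * vd \<gamma> s" for s
  define fE where "fE s = integrand \<gamma> lt lL \<alpha> \<delta> x s * vd \<gamma> s" for s
  define g' where "g' s = gfun \<gamma> lt lL \<alpha> \<delta> x s * (- \<delta> * (vd \<gamma> s / \<gamma> s) + (\<Sum>k\<in>UNIV. \<alpha> $ k * (snd x $ k * vd \<gamma> s / lin x k (\<gamma> s))))" for s
  have pd: "pd2 (Phi \<gamma> lt lL A \<delta>) i x = A $ i * Phi \<gamma> lt lL (A - axis i 1) (\<delta> - 1) x" for i
    by (rule P2[OF x mu])
  have h1: "((\<lambda>s. (\<Sum>i\<in>UNIV - {k}. c i * (A $ i * fI i s)) + (\<Sum>i\<in>UNIV. \<alpha> $ i) * fst x $ k * fJ s) has_integral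
      ((\<Sum>i\<in>UNIV - {k}. c i * (A $ i * Phi \<gamma> lt lL (A - axis i 1) (\<delta> - 1) x)) + (\<Sum>i\<in>UNIV. \<alpha> $ i) * fst x $ k * Phi \<gamma> lt lL A \<delta> x)) {0..1}"
    unfolding fI_def fJ_def
    by (intro has_integral_add has_integral_sum has_integral_mult_right Phi_has_int[OF x mu1] Phi_has_int[OF x mu]) auto
  have h2: "((\<lambda>s. ((\<Sum>i\<in>UNIV. \<alpha> $ i) - \<delta>) * fE s - g' s) has_integral
      ((\<Sum>i\<in>UNIV. \<alpha> $ i) - \<delta>) * Phi \<gamma> lt lL \<alpha> \<delta> x - (gfun \<gamma> lt lL \<alpha> \<delta> x 1 - gfun \<gamma> lt lL \<alpha> \<delta> x 0)) {0..1}"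
    unfolding fE_def g'_def
    by (intro has_integral_diff has_integral_mult_right Phi_has_int[OF x mu] gfun_FTC[OF x md])
  have eq: "(\<Sum>i\<in>UNIV - {k}. c i * (A $ i * fI i s)) + (\<Sum>i\<in>UNIV. \<alpha> $ i) * fst x $ k * fJ s
      = ((\<Sum>i\<in>UNIV. \<alpha> $ i) - \<delta>) * fE s - g' s" if s: "s \<in> {0..1} - {0, 1}" for s
  proof -
    have s0: "s \<in> {0<..<1}" using s by auto
    have s1: "s \<in> {0..1}" using s by auto
    have t: "\<gamma> s \<noteq> 0" using avoid_t s0 by auto
    define E where "E = integrand \<gamma> lt lL \<alpha> \<delta> x s"
    define L where "L j = lin x j (\<gamma> s)" for j
    have L: "\<And>j. L j = fst x $ j + snd x $ j * \<gamma> s" "\<And>j. L j \<noteq> 0"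
      using lnz x s1 by (auto simp: L_def lin_def)
    have eJ: "integrand \<gamma> lt lL A \<delta> x s = E / L k"
      unfolding A_def E_def L_def by (rule shift_e[OF x s0])
    have eI: "fI i s = E / L k * \<gamma> s / L i * vd \<gamma> s" for i
      unfolding fI_def shift_e[OF x s0] shift_d[OF x s0] eJ L_def by simp
    have "(\<Sum>i\<in>UNIV - {k}. c i * (A $ i * fI i s)) = (\<Sum>i\<in>UNIV - {k}. c i * (\<alpha> $ i * (E / L k * \<gamma> s / L i * vd \<gamma> s)))"
      by (rule sum.cong) (auto simp: A_def eI axis_def)
    moreover have "fJ s = E / L k * vd \<gamma> s" by (simp add: fJ_def eJ)
    moreover have "fE s = E * vd \<gamma> s" by (simp add: fE_def E_def)
    moreover have "g' s = E * \<gamma> s * (- \<delta> * (vd \<gamma> s / \<gamma> s) + (\<Sum>j\<in>UNIV. \<alpha> $ j * (snd x $ j * vd \<gamma> s / L j)))"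
      by (simp add: g'_def gfun_E[OF x s0] E_def L_def)
    ultimately show ?thesis
      using alg2[of L "\<lambda>j. fst x $ j" "\<lambda>j. snd x $ j" "\<gamma> s" k "\<lambda>j. \<alpha> $ j" E "vd \<gamma> s" \<delta>, OF L(1) L(2) t]
      unfolding c_def by simp
  qed
  have "((\<lambda>s. (\<Sum>i\<in>UNIV - {k}. c i * (A $ i * fI i s)) + (\<Sum>i\<in>UNIV. \<alpha> $ i) * fst x $ k * fJ s) has_integral
      ((\<Sum>i\<in>UNIV. \<alpha> $ i) - \<delta>) * Phi \<gamma> lt lL \<alpha> \<delta> x - (gfun \<gamma> lt lL \<alpha> \<delta> x 1 - gfun \<gamma> lt lL \<alpha> \<delta> x 0)) {0..1}"
  proof -
    have "((\<lambda>s. ((\<Sum>i\<in>UNIV. \<alpha> $ i) - \<delta>) * fE s - g' s) has_integral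
      ((\<Sum>i\<in>UNIV. \<alpha> $ i) - \<delta>) * Phi \<gamma> lt lL \<alpha> \<delta> x - (gfun \<gamma> lt lL \<alpha> \<delta> x 1 - gfun \<gamma> lt lL \<alpha> \<delta> x 0)) {0..1}
      \<longleftrightarrow> ((\<lambda>s. (\<Sum>i\<in>UNIV - {k}. c i * (A $ i * fI i s)) + (\<Sum>i\<in>UNIV. \<alpha> $ i) * fst x $ k * fJ s) has_integral
      ((\<Sum>i\<in>UNIV. \<alpha> $ i) - \<delta>) * Phi \<gamma> lt lL \<alpha> \<delta> x - (gfun \<gamma> lt lL \<alpha> \<delta> x 1 - gfun \<gamma> lt lL \<alpha> \<delta> x 0)) {0..1}"
      by (rule has_integral_spike_finite_eq[of "{0, 1}"]) (use eq in auto)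
    then show ?thesis using h2 by blast
  qed
  from has_integral_unique[OF h1 this]
  show ?thesis unfolding pd A_def[symmetric] c_def by simp
qed

lemma rel4:
  assumes x: "x \<in> U" and mu: "Re (- \<delta> - 1) > 0"
  shows "(\<Sum>i\<in>UNIV - {k}. fst x $ k * snd x $ i * pd1 (Phi \<gamma> lt lL (\<alpha> - axis k 1) (\<delta> - 1)) i x)
       + (\<Sum>i\<in>UNIV - {k}. snd x $ i
            * pd2 (\<lambda>y. snd y $ k * Phi \<gamma> lt lL (\<alpha> - axis k 1) (\<delta> - 1) y) i x)
       + \<alpha> $ k * (snd x $ k * Phi \<gamma> lt lL (\<alpha> - axis k 1) (\<delta> - 1) x)
     = \<delta> * Phi \<gamma> lt lL \<alpha> \<delta> x
       + (gfun \<gamma> lt lL \<alpha> \<delta> x 1 - gfun \<gamma> lt lL \<alpha> \<delta> x 0)"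
proof -
  define A where "A = \<alpha> - axis k 1"
  define x1 where "x1 j = fst x $ j" for j
  define x2 where "x2 j = snd x $ j" for j
  define al where "al j = \<alpha> $ j" for j
  define Ai where "Ai j = A $ j" for j
  have mu1: "Re (- (\<delta> - 1) - 1) > 0" using mu by simp
  have mu2: "Re (- (\<delta> - 1 - 1) - 1) > 0" using mu by simp
  have mu2': "Re (- (\<delta> - 2) - 1) > 0" using mu by simp
  have md: "Re (- \<delta>) > 0" using mu by simp
  define fI where "fI i s = integrand \<gamma> lt lL (A - axis i 1) (\<delta> - 1) x s * vd \<gamma> s" for i s
  define fI2 where "fI2 i s = integrand \<gamma> lt lL (A - axis i 1) (\<delta> - 1 - 1) x s * vd \<gamma> s" for i s
  define fK where "fK s = integrand \<gamma> lt lL A (\<delta> - 1) x s * vd \<gamma> s" for s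
  define fE where "fE s = integrand \<gamma> lt lL \<alpha> \<delta> x s * vd \<gamma> s" for s
  define g' where "g' s = gfun \<gamma> lt lL \<alpha> \<delta> x s * (- \<delta> * (vd \<gamma> s / \<gamma> s) + (\<Sum>k\<in>UNIV. al k * (x2 k * vd \<gamma> s / lin x k (\<gamma> s))))" for s
  have pd1: "pd1 (Phi \<gamma> lt lL A (\<delta> - 1)) i x = Ai i * Phi \<gamma> lt lL (A - axis i 1) (\<delta> - 1) x" for i
    unfolding Ai_def by (rule P1[OF x mu1])
  have pd2: "pd2 (\<lambda>y. snd y $ k * Phi \<gamma> lt lL A (\<delta> - 1) y) i x = x2 k * (Ai i * Phi \<gamma> lt lL (A - axis i 1) (\<delta> - 1 - 1) x)"
    if "i \<in> UNIV - {k}" for i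
    using P2k[OF x mu1] that unfolding x2_def Ai_def by blast
  have h1: "((\<lambda>s. (\<Sum>i\<in>UNIV - {k}. x1 k * x2 i * (Ai i * fI i s))
       + (\<Sum>i\<in>UNIV - {k}. x2 i * (x2 k * (Ai i * fI2 i s)))
       + al k * (x2 k * fK s)) has_integral
      (\<Sum>i\<in>UNIV - {k}. x1 k * x2 i * (Ai i * Phi \<gamma> lt lL (A - axis i 1) (\<delta> - 1) x))
       + (\<Sum>i\<in>UNIV - {k}. x2 i * (x2 k * (Ai i * Phi \<gamma> lt lL (A - axis i 1) (\<delta> - 1 - 1) x)))
       + al k * (x2 k * Phi \<gamma> lt lL A (\<delta> - 1) x)) {0..1}"
  proof -
    have a: "((\<lambda>s. \<Sum>i\<in>UNIV - {k}. x1 k * x2 i * (Ai i * fI i s)) has_integral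
      (\<Sum>i\<in>UNIV - {k}. x1 k * x2 i * (Ai i * Phi \<gamma> lt lL (A - axis i 1) (\<delta> - 1) x))) {0..1}"
      by (rule has_integral_sum) (auto simp: fI_def intro!: has_integral_mult_right Phi_has_int[OF x mu1])
    have b: "((\<lambda>s. \<Sum>i\<in>UNIV - {k}. x2 i * (x2 k * (Ai i * fI2 i s))) has_integral
      (\<Sum>i\<in>UNIV - {k}. x2 i * (x2 k * (Ai i * Phi \<gamma> lt lL (A - axis i 1) (\<delta> - 1 - 1) x)))) {0..1}"
      by (rule has_integral_sum) (auto simp: fI2_def intro!: has_integral_mult_right Phi_has_int[OF x mu2] Phi_has_int[OF x mu2'])
    have c: "((\<lambda>s. al k * (x2 k * fK s)) has_integral al k * (x2 k * Phi \<gamma> lt lL A (\<delta> - 1) x)) {0..1}"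
      unfolding fK_def by (intro has_integral_mult_right Phi_has_int[OF x mu1])
    show ?thesis by (rule has_integral_add[OF has_integral_add[OF a b] c])
  qed
  have h2: "((\<lambda>s. \<delta> * fE s + g' s) has_integral
      \<delta> * Phi \<gamma> lt lL \<alpha> \<delta> x + (gfun \<gamma> lt lL \<alpha> \<delta> x 1 - gfun \<gamma> lt lL \<alpha> \<delta> x 0)) {0..1}"
    unfolding fE_def g'_def x2_def al_def
    by (intro has_integral_add has_integral_mult_right Phi_has_int[OF x mu] gfun_FTC[OF x md])
  have eq: "(\<Sum>i\<in>UNIV - {k}. x1 k * x2 i * (Ai i * fI i s))
       + (\<Sum>i\<in>UNIV - {k}. x2 i * (x2 k * (Ai i * fI2 i s)))
       + al k * (x2 k * fK s) = \<delta> * fE s + g' s" if s: "s \<in> {0..1} - {0, 1}" for s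
  proof -
    have s0: "s \<in> {0<..<1}" using s by auto
    have s1: "s \<in> {0..1}" using s by auto
    have t: "\<gamma> s \<noteq> 0" using avoid_t s0 by auto
    define E where "E = integrand \<gamma> lt lL \<alpha> \<delta> x s"
    define L where "L j = lin x j (\<gamma> s)" for j
    have L: "\<And>j. L j = fst x $ j + snd x $ j * \<gamma> s" "\<And>j. L j \<noteq> 0"
      using lnz x s1 by (auto simp: L_def lin_def)
    have eJ: "integrand \<gamma> lt lL A \<delta> x s = E / L k"
      unfolding A_def E_def L_def by (rule shift_e[OF x s0])
    have eI: "fI i s = E / L k * \<gamma> s / L i * vd \<gamma> s" for i
      unfolding fI_def shift_e[OF x s0] shift_d[OF x s0] eJ L_def by simp
    have eI2: "fI2 i s = E / L k * \<gamma> s / L i * \<gamma> s * vd \<gamma> s" for i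
      unfolding fI2_def shift_d[OF x s0, of _ "\<delta> - 1"] shift_e[OF x s0] shift_d[OF x s0] eJ L_def by simp
    have "(\<Sum>i\<in>UNIV - {k}. x1 k * x2 i * (Ai i * fI i s))
        = (\<Sum>i\<in>UNIV - {k}. x1 k * x2 i * (\<alpha> $ i * (E / L k * \<gamma> s / L i * vd \<gamma> s)))"
      by (rule sum.cong) (auto simp: Ai_def A_def eI axis_def)
    moreover have "(\<Sum>i\<in>UNIV - {k}. x2 i * (x2 k * (Ai i * fI2 i s)))
        = (\<Sum>i\<in>UNIV - {k}. x2 i * (x2 k * (\<alpha> $ i * (E / L k * \<gamma> s / L i * \<gamma> s * vd \<gamma> s))))"
      by (rule sum.cong) (auto simp: Ai_def A_def eI2 axis_def)
    moreover have "fK s = E / L k * \<gamma> s * vd \<gamma> s" by (simp add: fK_def shift_d[OF x s0] eJ)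
    moreover have "fE s = E * vd \<gamma> s" by (simp add: fE_def E_def)
    moreover have "g' s = E * \<gamma> s * (- \<delta> * (vd \<gamma> s / \<gamma> s) + (\<Sum>j\<in>UNIV. \<alpha> $ j * (snd x $ j * vd \<gamma> s / L j)))"
      by (simp add: g'_def gfun_E[OF x s0] E_def L_def x2_def al_def)
    ultimately show ?thesis
      using alg4[of L "\<lambda>j. fst x $ j" "\<lambda>j. snd x $ j" "\<gamma> s" k "\<lambda>j. \<alpha> $ j" E "vd \<gamma> s" \<delta>, OF L(1) L(2) t]
      by (simp add: x1_def x2_def al_def)
  qed
  have "((\<lambda>s. (\<Sum>i\<in>UNIV - {k}. x1 k * x2 i * (Ai i * fI i s))
       + (\<Sum>i\<in>UNIV - {k}. x2 i * (x2 k * (Ai i * fI2 i s)))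
       + al k * (x2 k * fK s)) has_integral
      \<delta> * Phi \<gamma> lt lL \<alpha> \<delta> x + (gfun \<gamma> lt lL \<alpha> \<delta> x 1 - gfun \<gamma> lt lL \<alpha> \<delta> x 0)) {0..1}"
  proof -
    have "((\<lambda>s. \<delta> * fE s + g' s) has_integral
      \<delta> * Phi \<gamma> lt lL \<alpha> \<delta> x + (gfun \<gamma> lt lL \<alpha> \<delta> x 1 - gfun \<gamma> lt lL \<alpha> \<delta> x 0)) {0..1}
      \<longleftrightarrow> ((\<lambda>s. (\<Sum>i\<in>UNIV - {k}. x1 k * x2 i * (Ai i * fI i s))
       + (\<Sum>i\<in>UNIV - {k}. x2 i * (x2 k * (Ai i * fI2 i s)))
       + al k * (x2 k * fK s)) has_integral
      \<delta> * Phi \<gamma> lt lL \<alpha> \<delta> x + (gfun \<gamma> lt lL \<alpha> \<delta> x 1 - gfun \<gamma> lt lL \<alpha> \<delta> x 0)) {0..1}"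
      by (rule has_integral_spike_finite_eq[of "{0, 1}"]) (use eq in auto)
    then show ?thesis using h2 by blast
  qed
  from has_integral_unique[OF h1 this]
  have r: "(\<Sum>i\<in>UNIV - {k}. x1 k * x2 i * (Ai i * Phi \<gamma> lt lL (A - axis i 1) (\<delta> - 1) x))
       + (\<Sum>i\<in>UNIV - {k}. x2 i * (x2 k * (Ai i * Phi \<gamma> lt lL (A - axis i 1) (\<delta> - 1 - 1) x)))
       + al k * (x2 k * Phi \<gamma> lt lL A (\<delta> - 1) x)
      = \<delta> * Phi \<gamma> lt lL \<alpha> \<delta> x + (gfun \<gamma> lt lL \<alpha> \<delta> x 1 - gfun \<gamma> lt lL \<alpha> \<delta> x 0)" .
  have s2: "(\<Sum>i\<in>UNIV - {k}. x2 i * pd2 (\<lambda>y. snd y $ k * Phi \<gamma> lt lL A (\<delta> - 1) y) i x)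
      = (\<Sum>i\<in>UNIV - {k}. x2 i * (x2 k * (Ai i * Phi \<gamma> lt lL (A - axis i 1) (\<delta> - 1 - 1) x)))"
    by (rule sum.cong) (simp_all add: pd2)
  show ?thesis unfolding A_def[symmetric] using r pd1 s2 by (simp add: x1_def x2_def al_def Ai_def)
qed

end

theorem theorem4:
  fixes a b :: complex
    and \<gamma> :: "real \<Rightarrow> complex"
    and lt :: "real \<Rightarrow> complex"
    and lL :: "'n::finite \<Rightarrow> (complex^'n) \<times> (complex^'n) \<Rightarrow> real \<Rightarrow> complex"
    and U :: "((complex^'n) \<times> (complex^'n)) set"
    and \<alpha> :: "complex^'n" and \<delta> :: complex
    and x :: "(complex^'n) \<times> (complex^'n)"
    and k :: 'n
  assumes path: "valid_path \<gamma>" "pathstart \<gamma> = a" "pathfinish \<gamma> = b"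
    and U: "open U" "x \<in> U"
    and avoid_t: "\<forall>s\<in>{0<..<1}. \<gamma> s \<noteq> 0"
    and avoid_L: "\<forall>y\<in>U. \<forall>s\<in>{0<..<1}. \<forall>i. lin y i (\<gamma> s) \<noteq> 0"
    and lt_cont: "continuous_on {s\<in>{0..1}. \<gamma> s \<noteq> 0} lt"
    and lt_log: "\<forall>s\<in>{0..1}. \<gamma> s \<noteq> 0 \<longrightarrow> exp (lt s) = \<gamma> s"
    and lt_bdd: "bounded (Im ` lt ` {s\<in>{0..1}. \<gamma> s \<noteq> 0})"
    and lL_cont: "\<forall>i. continuous_on {(y, s). y \<in> U \<and> s \<in> {0..1} \<and> lin y i (\<gamma> s) \<noteq> 0}
                        (\<lambda>(y, s). lL i y s)"
    and lL_log: "\<forall>i. \<forall>y\<in>U. \<forall>s\<in>{0..1}. lin y i (\<gamma> s) \<noteq> 0 \<longrightarrow> exp (lL i y s) = lin y i (\<gamma> s)"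
    and re_delta: "Re (- \<delta> - 1) > 0"
    and re_alpha: "\<forall>i. Re (\<alpha> $ i) > 0"
  shows
    "pd1 (Phi \<gamma> lt lL \<alpha> \<delta>) k x = \<alpha> $ k * Phi \<gamma> lt lL (\<alpha> - axis k 1) \<delta> x
     \<and>
     (\<Sum>i\<in>UNIV - {k}. (fst x $ i * snd x $ k - fst x $ k * snd x $ i)
                         * pd2 (Phi \<gamma> lt lL (\<alpha> - axis k 1) \<delta>) i x)
       + (\<Sum>i\<in>UNIV. \<alpha> $ i) * fst x $ k * Phi \<gamma> lt lL (\<alpha> - axis k 1) \<delta> x
     = ((\<Sum>i\<in>UNIV. \<alpha> $ i) - \<delta>) * Phi \<gamma> lt lL \<alpha> \<delta> x
       - (gfun \<gamma> lt lL \<alpha> \<delta> x 1 - gfun \<gamma> lt lL \<alpha> \<delta> x 0)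
     \<and>
     pd2 (Phi \<gamma> lt lL \<alpha> \<delta>) k x = \<alpha> $ k * Phi \<gamma> lt lL (\<alpha> - axis k 1) (\<delta> - 1) x
     \<and>
     (\<Sum>i\<in>UNIV - {k}. fst x $ k * snd x $ i * pd1 (Phi \<gamma> lt lL (\<alpha> - axis k 1) (\<delta> - 1)) i x)
       + (\<Sum>i\<in>UNIV - {k}. snd x $ i
            * pd2 (\<lambda>y. snd y $ k * Phi \<gamma> lt lL (\<alpha> - axis k 1) (\<delta> - 1) y) i x)
       + \<alpha> $ k * (snd x $ k * Phi \<gamma> lt lL (\<alpha> - axis k 1) (\<delta> - 1) x)
     = \<delta> * Phi \<gamma> lt lL \<alpha> \<delta> x
       + (gfun \<gamma> lt lL \<alpha> \<delta> x 1 - gfun \<gamma> lt lL \<alpha> \<delta> x 0)"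
proof -
  interpret setting \<gamma> lt lL U
    by unfold_locales (use path(1) U(1) avoid_t avoid_L lt_cont lt_log lt_bdd lL_cont lL_log in auto)
  show ?thesis
    by (intro conjI P1 rel2 P2 rel4 U(2) re_delta)
qed

end
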